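(* For a fixed discrete memoryless MAC $p(y|x_1,x_2)$, define for $C_1,C_2\ge 0$ $$f_\ell(C_1,C_2)=\max_{p(u,x_1,x_2)}\min\left\{\begin{array}{l} C_1+C_2-I(X_1;X_2|U),\\ C_2+I(X_1;Y|X_2U),\\ C_1+I(X_2;Y|X_1U),\\ \tfrac12\big(C_1+C_2+I(X_1X_2;Y|U)-I(X_1;X_2|U)\big),\\ I(X_1X_2;Y)\end{array}\right\},$$ where the maximum is over pmfs $p(u,x_1,x_2)$ on $\mathcal U\times\mathcal X_1\times\mathcal X_2$ with $U$ taking values in a finite set with $|\mathcal{U}|\le \min\{|\mathcal{X}_1||\mathcal{X}_2|+3,|\mathcal{Y}|+4\}$, and the information quantities are evaluated for $p(u,x_1,x_2)p(y|x_1,x_2)$. Then $f_\ell$ is concave in $(C_1,C_2)$.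
   Context: $f_\ell(C_1,C_2)$ is the achievable rate (lower bound on capacity) of a two-relay diamond network whose broadcast part consists of two orthogonal error-free bit-pipes of capacities $C_1,C_2$ and whose second hop is the MAC $p(y|x_1,x_2)$ with finite alphabets $\mathcal X_1,\mathcal X_2,\mathcal Y$. Logarithms are base 2. *)

theory Defs
  imports "HOL-Analysis.Analysis"
begin

text \<open>A joint pmf is given as a nonnegative function P on a finite sample space Om.
  Note log 2 0 = 0 in Isabelle, so terms with zero probability vanish.\<close>

definition marg :: "'w set \<Rightarrow> ('w \<Rightarrow> real) \<Rightarrow> ('w \<Rightarrow> 'v) \<Rightarrow> 'v \<Rightarrow> real" where
  "marg Om P g v = (\<Sum>w\<in>{w\<in>Om. g w = v}. P w)"

definition cmi :: "'w set \<Rightarrow> ('w \<Rightarrow> real) \<Rightarrow> ('w \<Rightarrow> 'a) \<Rightarrow> ('w \<Rightarrow> 'b) \<Rightarrow> ('w \<Rightarrow> 'c) \<Rightarrow> real" where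
  "cmi Om P A B C =
    (\<Sum>(a,b,c)\<in>(\<lambda>w. (A w, B w, C w)) ` Om.
       marg Om P (\<lambda>w. (A w, B w, C w)) (a,b,c) *
       log 2 (marg Om P (\<lambda>w. (A w, B w, C w)) (a,b,c) * marg Om P C c /
              (marg Om P (\<lambda>w. (A w, C w)) (a,c) * marg Om P (\<lambda>w. (B w, C w)) (b,c))))"

definition mi :: "'w set \<Rightarrow> ('w \<Rightarrow> real) \<Rightarrow> ('w \<Rightarrow> 'a) \<Rightarrow> ('w \<Rightarrow> 'b) \<Rightarrow> real" where
  "mi Om P A B = cmi Om P A B (\<lambda>_. ())"

definition is_mac :: "('x1::finite \<Rightarrow> 'x2::finite \<Rightarrow> 'y::finite \<Rightarrow> real) \<Rightarrow> bool" where
  "is_mac W \<longleftrightarrow> (\<forall>x1 x2 y. W x1 x2 y \<ge> 0) \<and> (\<forall>x1 x2. (\<Sum>y\<in>UNIV. W x1 x2 y) = 1)"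

definition U_bound :: "('x1::finite \<Rightarrow> 'x2::finite \<Rightarrow> 'y::finite \<Rightarrow> real) \<Rightarrow> nat" where
  "U_bound W = min (CARD('x1) * CARD('x2) + 3) (CARD('y) + 4)"

definition is_pmf_ux :: "nat \<Rightarrow> (nat \<Rightarrow> 'x1::finite \<Rightarrow> 'x2::finite \<Rightarrow> real) \<Rightarrow> bool" where
  "is_pmf_ux k p \<longleftrightarrow> (\<forall>u x1 x2. p u x1 x2 \<ge> 0) \<and> (\<forall>u x1 x2. u \<ge> k \<longrightarrow> p u x1 x2 = 0)
     \<and> (\<Sum>u<k. \<Sum>x1\<in>UNIV. \<Sum>x2\<in>UNIV. p u x1 x2) = 1"

definition Om :: "nat \<Rightarrow> (nat \<times> 'x1::finite \<times> 'x2::finite \<times> 'y::finite) set" where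
  "Om k = {..<k} \<times> UNIV"

definition jointP :: "(nat \<Rightarrow> 'x1 \<Rightarrow> 'x2 \<Rightarrow> real) \<Rightarrow> ('x1 \<Rightarrow> 'x2 \<Rightarrow> 'y \<Rightarrow> real)
    \<Rightarrow> nat \<times> 'x1 \<times> 'x2 \<times> 'y \<Rightarrow> real" where
  "jointP p W = (\<lambda>(u,x1,x2,y). p u x1 x2 * W x1 x2 y)"

definition vU :: "nat \<times> 'x1 \<times> 'x2 \<times> 'y \<Rightarrow> nat" where "vU = (\<lambda>(u,x1,x2,y). u)"
definition vX1 :: "nat \<times> 'x1 \<times> 'x2 \<times> 'y \<Rightarrow> 'x1" where "vX1 = (\<lambda>(u,x1,x2,y). x1)"
definition vX2 :: "nat \<times> 'x1 \<times> 'x2 \<times> 'y \<Rightarrow> 'x2" where "vX2 = (\<lambda>(u,x1,x2,y). x2)"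
definition vY :: "nat \<times> 'x1 \<times> 'x2 \<times> 'y \<Rightarrow> 'y" where "vY = (\<lambda>(u,x1,x2,y). y)"

definition f_obj :: "('x1::finite \<Rightarrow> 'x2::finite \<Rightarrow> 'y::finite \<Rightarrow> real) \<Rightarrow> nat
     \<Rightarrow> (nat \<Rightarrow> 'x1 \<Rightarrow> 'x2 \<Rightarrow> real) \<Rightarrow> real \<Rightarrow> real \<Rightarrow> real" where
  "f_obj W k p C1 C2 =
    (let S = (Om k :: (nat \<times> 'x1 \<times> 'x2 \<times> 'y) set); P = jointP p W;
         I12U = cmi S P vX1 vX2 vU;
         I1Y = cmi S P vX1 vY (\<lambda>w. (vX2 w, vU w));
         I2Y = cmi S P vX2 vY (\<lambda>w. (vX1 w, vU w));
         I12YU = cmi S P (\<lambda>w. (vX1 w, vX2 w)) vY vU;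
         I12Y = mi S P (\<lambda>w. (vX1 w, vX2 w)) vY
     in Min {C1 + C2 - I12U, C2 + I1Y, C1 + I2Y, (C1 + C2 + I12YU - I12U) / 2, I12Y})"

text \<open>f_l(C1,C2): maximum (supremum, attained) over pmfs p(u,x1,x2) with
  U ranging over a finite set {..<k}, 1 \<le> k \<le> U_bound.\<close>
definition f_l :: "('x1::finite \<Rightarrow> 'x2::finite \<Rightarrow> 'y::finite \<Rightarrow> real) \<Rightarrow> real \<times> real \<Rightarrow> real" where
  "f_l W C = Sup {f_obj W k p (fst C) (snd C) | k p. 1 \<le> k \<and> k \<le> U_bound W \<and> is_pmf_ux k p}"

end

theory Submission
  imports Defs
begin


lemma marg_comp:
  assumes "finite S"
  shows "marg S P (\<lambda>w. f (g w)) v = (\<Sum>t\<in>{t\<in>g ` S. f t = v}. marg S P g t)"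
proof -
  have "(\<Sum>t\<in>{t\<in>g ` S. f t = v}. marg S P g t)
      = (\<Sum>t\<in>{t\<in>g ` S. f t = v}. sum P {w \<in> {w\<in>S. f (g w) = v}. g w = t})"
    unfolding marg_def by (rule sum.cong) (auto intro!: sum.cong)
  also have "\<dots> = sum P {w\<in>S. f (g w) = v}"
    by (rule sum.group) (use assms in auto)
  finally show ?thesis unfolding marg_def by simp
qed

lemma marg_push:
  assumes "finite S"
  shows "marg S P (\<lambda>w. G (\<phi> w)) v = marg (\<phi> ` S) (marg S P \<phi>) G v"
  unfolding marg_comp[OF assms] by (simp add: marg_def[of "\<phi> ` S"])

lemma cmi_push:
  assumes "finite S"
  shows "cmi S P (\<lambda>w. A (\<phi> w)) (\<lambda>w. B (\<phi> w)) (\<lambda>w. C (\<phi> w))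
       = cmi (\<phi> ` S) (marg S P \<phi>) A B C"
proof -
  have i: "(\<lambda>w. (A (\<phi> w), B (\<phi> w), C (\<phi> w))) ` S = (\<lambda>r. (A r, B r, C r)) ` (\<phi> ` S)"
    by (simp add: image_image)
  show ?thesis
    unfolding cmi_def i
    using marg_push[OF assms, of P "\<lambda>r. (A r, B r, C r)" \<phi>]
      marg_push[OF assms, of P "\<lambda>r. (A r, C r)" \<phi>]
      marg_push[OF assms, of P "\<lambda>r. (B r, C r)" \<phi>]
      marg_push[OF assms, of P C \<phi>]
    by simp
qed

lemma marg_cong_P:
  assumes "\<And>w. w \<in> S \<Longrightarrow> P w = Q w"
  shows "marg S P g v = marg S Q g v"
  unfolding marg_def using assms by (intro sum.cong) auto

lemma cmi_cong_P:
  assumes "\<And>w. w \<in> S \<Longrightarrow> P w = Q w"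
  shows "cmi S P A B C = cmi S Q A B C"
proof -
  show ?thesis unfolding cmi_def by (simp add: marg_cong_P[of S P Q, OF assms])
qed

lemma marg_inj:
  assumes "inj_on k (g ` S)" "v \<in> g ` S"
  shows "marg S P (\<lambda>w. k (g w)) (k v) = marg S P g v"
proof -
  have "{w \<in> S. k (g w) = k v} = {w \<in> S. g w = v}"
    using assms by (auto dest: inj_onD)
  then show ?thesis unfolding marg_def by simp
qed

lemma cmi_inj_C:
  assumes "inj_on h (C ` S)"
  shows "cmi S P A B (\<lambda>w. h (C w)) = cmi S P A B C"
proof -
  let ?T = "(\<lambda>w. (A w, B w, C w)) ` S"
  let ?psi = "\<lambda>(a,b,c). (a,b,h c)"
  have img: "(\<lambda>w. (A w, B w, h (C w))) ` S = ?psi ` ?T"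
    by (auto simp: image_image)
  have inj: "inj_on ?psi ?T"
    using assms by (auto simp: inj_on_def)
  have i1: "inj_on (\<lambda>(a,c). (a, h c)) ((\<lambda>w. (A w, C w)) ` S)"
    using assms by (auto simp: inj_on_def)
  have i2: "inj_on (\<lambda>(a,c). (a, h c)) ((\<lambda>w. (B w, C w)) ` S)"
    using assms by (auto simp: inj_on_def)
  have e1: "marg S P (\<lambda>w. (A w, B w, h (C w))) (A w, B w, h (C w))
        = marg S P (\<lambda>w. (A w, B w, C w)) (A w, B w, C w)" if "w \<in> S" for w
      using marg_inj[OF inj, of "(A w, B w, C w)" P] that by simp
  have e2: "marg S P (\<lambda>w. (A w, h (C w))) (A w, h (C w))
        = marg S P (\<lambda>w. (A w, C w)) (A w, C w)" if "w \<in> S" for w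
      using marg_inj[OF i1, of "(A w, C w)" P] that by simp
  have e3: "marg S P (\<lambda>w. (B w, h (C w))) (B w, h (C w))
        = marg S P (\<lambda>w. (B w, C w)) (B w, C w)" if "w \<in> S" for w
      using marg_inj[OF i2, of "(B w, C w)" P] that by simp
  have e4: "marg S P (\<lambda>w. h (C w)) (h (C w)) = marg S P C (C w)" if "w \<in> S" for w
      using marg_inj[OF assms, of "C w" P] that by simp
  show ?thesis
    unfolding cmi_def img sum.reindex[OF inj]
    by (rule sum.cong) (auto simp: e1 e2 e3 e4)
qed

lemma marg_scale: "marg S (\<lambda>w. c * P w) g v = c * marg S P g v"
  unfolding marg_def by (simp add: sum_distrib_left)

lemma cmi_scale:
  assumes "c \<ge> 0"
  shows "cmi S (\<lambda>w. c * P w) A B C = c * cmi S P A B C"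
proof (cases "c = 0")
  case True then show ?thesis by (simp add: cmi_def marg_def)
next
  case False
  have *: "\<And>x y z t::real. (c*x) * (c*y) / ((c*z) * (c*t)) = x*y/(z*t)"
    using False by (simp add: field_simps)
  show ?thesis unfolding cmi_def marg_scale * sum_distrib_left
    by (rule sum.cong) (auto simp: split_def)
qed

lemma marg_restrict:
  assumes "S' \<subseteq> S" "\<And>w. w \<in> S \<Longrightarrow> g w = v \<Longrightarrow> w \<in> S'"
  shows "marg S P g v = marg S' P g v"
proof -
  have "{w \<in> S. g w = v} = {w \<in> S'. g w = v}" using assms by auto
  then show ?thesis unfolding marg_def by simp
qed

lemma cmi_split0:
  assumes fK: "finite K" and fR: "finite R"
    and pi: "\<And>u r. u \<in> K \<Longrightarrow> r \<in> R \<Longrightarrow> \<pi> (C (u,r)) = u"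
  shows "cmi (K \<times> R) P A B C = (\<Sum>u\<in>K. cmi ({u} \<times> R) P A B C)"
proof -
  let ?g = "\<lambda>w. (A w, B w, C w)"
  have T: "?g ` (K \<times> R) = (\<Union>u\<in>K. ?g ` ({u} \<times> R))" by auto
  have disj: "\<forall>u\<in>K. \<forall>u'\<in>K. u \<noteq> u' \<longrightarrow> ?g ` ({u} \<times> R) \<inter> ?g ` ({u'} \<times> R) = {}"
  proof (intro ballI impI)
    fix u u' assume uu: "u \<in> K" "u' \<in> K" "u \<noteq> u'"
    show "?g ` ({u} \<times> R) \<inter> ?g ` ({u'} \<times> R) = {}"
    proof (rule ccontr)
      assume "?g ` ({u} \<times> R) \<inter> ?g ` ({u'} \<times> R) \<noteq> {}"
      then obtain r r' where rr: "r \<in> R" "r' \<in> R" "?g (u,r) = ?g (u',r')" by blast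
      then have "C (u,r) = C (u',r')" by simp
      then have "\<pi> (C (u,r)) = \<pi> (C (u',r'))" by simp
      then show False using pi[OF uu(1) rr(1)] pi[OF uu(2) rr(2)] uu(3) by simp
    qed
  qed
  have fin: "\<forall>u\<in>K. finite (?g ` ({u} \<times> R))" using fR by auto
  have sub: "{u} \<times> R \<subseteq> K \<times> R" if "u \<in> K" for u using that by auto
  have key: "w \<in> {u} \<times> R" if hh: "u \<in> K" "r \<in> R" "w \<in> K \<times> R" "C w = C (u,r)" for u r w
  proof -
    obtain u' r' where w: "w = (u',r')" "u' \<in> K" "r' \<in> R" using hh(3) by auto
    have "u' = \<pi> (C w)" using pi w by simp
    also have "\<dots> = u" using hh pi by simp
    finally show ?thesis using w by simp
  qed
  have m1: "marg (K \<times> R) P ?g (?g (u,r)) = marg ({u} \<times> R) P ?g (?g (u,r))"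
    if "u \<in> K" "r \<in> R" for u r
    by (rule marg_restrict[OF sub[OF that(1)]]) (use key that in auto)
  have m2: "marg (K \<times> R) P C (C (u,r)) = marg ({u} \<times> R) P C (C (u,r))"
    if "u \<in> K" "r \<in> R" for u r
    by (rule marg_restrict[OF sub[OF that(1)]]) (use key that in auto)
  have m3: "marg (K \<times> R) P (\<lambda>w. (A w, C w)) (A (u,r), C (u,r))
       = marg ({u} \<times> R) P (\<lambda>w. (A w, C w)) (A (u,r), C (u,r))"
    if "u \<in> K" "r \<in> R" for u r
    by (rule marg_restrict[OF sub[OF that(1)]]) (use key that in auto)
  have m4: "marg (K \<times> R) P (\<lambda>w. (B w, C w)) (B (u,r), C (u,r))
       = marg ({u} \<times> R) P (\<lambda>w. (B w, C w)) (B (u,r), C (u,r))"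
    if "u \<in> K" "r \<in> R" for u r
    by (rule marg_restrict[OF sub[OF that(1)]]) (use key that in auto)
  show ?thesis
    unfolding cmi_def T sum.UNION_disjoint[OF fK fin disj]
    by (rule sum.cong[OF refl], rule sum.cong[OF refl]) (auto simp: m1 m2 m3 m4)
qed

lemma cmi_Pair:
  assumes fR: "finite R"
  shows "cmi ({u} \<times> R) P A B C = cmi R (\<lambda>r. P (u,r)) (\<lambda>r. A (u,r)) (\<lambda>r. B (u,r)) (\<lambda>r. C (u,r))"
proof -
  have "cmi R (\<lambda>r. P (u,r)) (\<lambda>r. A (u,r)) (\<lambda>r. B (u,r)) (\<lambda>r. C (u,r))
      = cmi (Pair u ` R) (marg R (\<lambda>r. P (u,r)) (Pair u)) A B C"
    using cmi_push[OF fR, of "\<lambda>r. P (u,r)" A "Pair u" B C] by simp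
  also have "\<dots> = cmi (Pair u ` R) P A B C"
  proof (rule cmi_cong_P)
    fix w assume "w \<in> Pair u ` R"
    then obtain r where r: "r \<in> R" "w = (u,r)" by auto
    have "{x \<in> R. (u, x) = (u, r)} = {r}" using r by auto
    then show "marg R (\<lambda>r. P (u, r)) (Pair u) w = P w"
      using r by (simp add: marg_def)
  qed
  also have "Pair u ` R = {u} \<times> R" by auto
  finally show ?thesis by simp
qed

lemma cmi_split:
  assumes fK: "finite K" and fR: "finite R"
    and pi: "\<And>u r. u \<in> K \<Longrightarrow> r \<in> R \<Longrightarrow> \<pi> (C (u,r)) = u"
  shows "cmi (K \<times> R) P A B C = (\<Sum>u\<in>K. cmi R (\<lambda>r. P (u,r)) (\<lambda>r. A (u,r)) (\<lambda>r. B (u,r)) (\<lambda>r. C (u,r)))"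
  by (simp add: cmi_split0[of K R \<pi> C P A B, OF fK fR pi] cmi_Pair[OF fR])

definition Qs :: "('x1 \<Rightarrow> 'x2 \<Rightarrow> 'y \<Rightarrow> real) \<Rightarrow> ('x1 \<Rightarrow> 'x2 \<Rightarrow> real) \<Rightarrow> 'x1 \<times> 'x2 \<times> 'y \<Rightarrow> real" where
  "Qs W s = (\<lambda>(x1,x2,y). s x1 x2 * W x1 x2 y)"

definition G1 :: "('x1::finite \<Rightarrow> 'x2::finite \<Rightarrow> 'y::finite \<Rightarrow> real) \<Rightarrow> ('x1 \<Rightarrow> 'x2 \<Rightarrow> real) \<Rightarrow> real" where
  "G1 W s = cmi UNIV (Qs W s) (\<lambda>(x1,x2,y). x1) (\<lambda>(x1,x2,y). x2) (\<lambda>_. ())"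
definition G2 :: "('x1::finite \<Rightarrow> 'x2::finite \<Rightarrow> 'y::finite \<Rightarrow> real) \<Rightarrow> ('x1 \<Rightarrow> 'x2 \<Rightarrow> real) \<Rightarrow> real" where
  "G2 W s = cmi UNIV (Qs W s) (\<lambda>(x1,x2,y). x1) (\<lambda>(x1,x2,y). y) (\<lambda>(x1,x2,y). x2)"
definition G3 :: "('x1::finite \<Rightarrow> 'x2::finite \<Rightarrow> 'y::finite \<Rightarrow> real) \<Rightarrow> ('x1 \<Rightarrow> 'x2 \<Rightarrow> real) \<Rightarrow> real" where
  "G3 W s = cmi UNIV (Qs W s) (\<lambda>(x1,x2,y). x2) (\<lambda>(x1,x2,y). y) (\<lambda>(x1,x2,y). x1)"
definition G4 :: "('x1::finite \<Rightarrow> 'x2::finite \<Rightarrow> 'y::finite \<Rightarrow> real) \<Rightarrow> ('x1 \<Rightarrow> 'x2 \<Rightarrow> real) \<Rightarrow> real" where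
  "G4 W s = cmi UNIV (Qs W s) (\<lambda>(x1,x2,y). (x1,x2)) (\<lambda>(x1,x2,y). y) (\<lambda>_. ())"

lemma Qs_scale: "Qs W (\<lambda>a b. c * s a b) = (\<lambda>r. c * Qs W s r)"
  by (auto simp: Qs_def fun_eq_iff)

lemma G_scale:
  assumes "c \<ge> 0"
  shows "G1 W (\<lambda>a b. c * s a b) = c * G1 W s" "G2 W (\<lambda>a b. c * s a b) = c * G2 W s"
    "G3 W (\<lambda>a b. c * s a b) = c * G3 W s" "G4 W (\<lambda>a b. c * s a b) = c * G4 W s"
  unfolding G1_def G2_def G3_def G4_def Qs_scale cmi_scale[OF assms] by simp_all

lemma G_zero:
  "G1 W (\<lambda>a b. 0) = 0" "G2 W (\<lambda>a b. 0) = 0" "G3 W (\<lambda>a b. 0) = 0" "G4 W (\<lambda>a b. 0) = 0"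
  using G_scale[of 0 W "\<lambda>a b. 0"] by simp_all

lemma jointP_slice: "(\<lambda>r. jointP p W (u, r)) = Qs W (p u)"
  by (auto simp: jointP_def Qs_def fun_eq_iff)

lemma Om_prod: "Om k = {..<k} \<times> UNIV" by (simp add: Om_def)

lemma term1_decomp:
  fixes W :: "'x1::finite \<Rightarrow> 'x2::finite \<Rightarrow> 'y::finite \<Rightarrow> real"
  shows "cmi (Om k :: (nat \<times> 'x1 \<times> 'x2 \<times> 'y) set) (jointP p W) vX1 vX2 vU = (\<Sum>u<k. G1 W (p u))"
proof -
  have "cmi (Om k :: (nat \<times> 'x1 \<times> 'x2 \<times> 'y) set) (jointP p W) vX1 vX2 vU
     = (\<Sum>u<k. cmi UNIV (\<lambda>r. jointP p W (u,r)) (\<lambda>r. vX1 (u,r)) (\<lambda>r. vX2 (u,r)) (\<lambda>r. vU (u,r)))"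
    unfolding Om_prod by (rule cmi_split[where \<pi>=id]) (auto simp: vU_def)
  also have "\<dots> = (\<Sum>u<k. G1 W (p u))"
  proof (rule sum.cong[OF refl])
    fix u
    have "cmi (UNIV::('x1 \<times> 'x2 \<times> 'y) set) (Qs W (p u)) (\<lambda>(x1,x2,y). x1) (\<lambda>(x1,x2,y). x2) (\<lambda>r. (\<lambda>_. u) ((\<lambda>_. ()) r))
       = G1 W (p u)" unfolding G1_def
      by (rule cmi_inj_C[where h="\<lambda>_. u" and C="\<lambda>_. ()"]) (simp add: inj_on_def)
    then show "cmi UNIV (\<lambda>r. jointP p W (u,r)) (\<lambda>r. vX1 (u,r)) (\<lambda>r. vX2 (u,r)) (\<lambda>r. vU (u,r)) = G1 W (p u)"
      by (simp add: jointP_slice vX1_def vX2_def vU_def)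
  qed
  finally show ?thesis .
qed

lemma term2_decomp:
  fixes W :: "'x1::finite \<Rightarrow> 'x2::finite \<Rightarrow> 'y::finite \<Rightarrow> real"
  shows "cmi (Om k :: (nat \<times> 'x1 \<times> 'x2 \<times> 'y) set) (jointP p W) vX1 vY (\<lambda>w. (vX2 w, vU w)) = (\<Sum>u<k. G2 W (p u))"
proof -
  have "cmi (Om k :: (nat \<times> 'x1 \<times> 'x2 \<times> 'y) set) (jointP p W) vX1 vY (\<lambda>w. (vX2 w, vU w))
     = (\<Sum>u<k. cmi UNIV (\<lambda>r. jointP p W (u,r)) (\<lambda>r. vX1 (u,r)) (\<lambda>r. vY (u,r)) (\<lambda>r. (vX2 (u,r), vU (u,r))))"
    unfolding Om_prod by (rule cmi_split[where \<pi>=snd]) (auto simp: vU_def)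
  also have "\<dots> = (\<Sum>u<k. G2 W (p u))"
  proof (rule sum.cong[OF refl])
    fix u
    have "cmi (UNIV::('x1 \<times> 'x2 \<times> 'y) set) (Qs W (p u)) (\<lambda>(x1,x2,y). x1) (\<lambda>(x1,x2,y). y)
          (\<lambda>r. (\<lambda>z. (z,u)) ((\<lambda>(x1,x2,y). x2) r))
       = G2 W (p u)" unfolding G2_def
      by (rule cmi_inj_C[where h="\<lambda>z. (z,u)"]) (simp add: inj_on_def)
    then show "cmi UNIV (\<lambda>r. jointP p W (u,r)) (\<lambda>r. vX1 (u,r)) (\<lambda>r. vY (u,r)) (\<lambda>r. (vX2 (u,r), vU (u,r))) = G2 W (p u)"
      by (simp add: jointP_slice vX1_def vX2_def vU_def vY_def split_def)
  qed
  finally show ?thesis .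
qed

lemma term3_decomp:
  fixes W :: "'x1::finite \<Rightarrow> 'x2::finite \<Rightarrow> 'y::finite \<Rightarrow> real"
  shows "cmi (Om k :: (nat \<times> 'x1 \<times> 'x2 \<times> 'y) set) (jointP p W) vX2 vY (\<lambda>w. (vX1 w, vU w)) = (\<Sum>u<k. G3 W (p u))"
proof -
  have "cmi (Om k :: (nat \<times> 'x1 \<times> 'x2 \<times> 'y) set) (jointP p W) vX2 vY (\<lambda>w. (vX1 w, vU w))
     = (\<Sum>u<k. cmi UNIV (\<lambda>r. jointP p W (u,r)) (\<lambda>r. vX2 (u,r)) (\<lambda>r. vY (u,r)) (\<lambda>r. (vX1 (u,r), vU (u,r))))"
    unfolding Om_prod by (rule cmi_split[where \<pi>=snd]) (auto simp: vU_def)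
  also have "\<dots> = (\<Sum>u<k. G3 W (p u))"
  proof (rule sum.cong[OF refl])
    fix u
    have "cmi (UNIV::('x1 \<times> 'x2 \<times> 'y) set) (Qs W (p u)) (\<lambda>(x1,x2,y). x2) (\<lambda>(x1,x2,y). y)
          (\<lambda>r. (\<lambda>z. (z,u)) ((\<lambda>(x1,x2,y). x1) r))
       = G3 W (p u)" unfolding G3_def
      by (rule cmi_inj_C[where h="\<lambda>z. (z,u)"]) (simp add: inj_on_def)
    then show "cmi UNIV (\<lambda>r. jointP p W (u,r)) (\<lambda>r. vX2 (u,r)) (\<lambda>r. vY (u,r)) (\<lambda>r. (vX1 (u,r), vU (u,r))) = G3 W (p u)"
      by (simp add: jointP_slice vX1_def vX2_def vU_def vY_def split_def)
  qed
  finally show ?thesis .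
qed

lemma term4_decomp:
  fixes W :: "'x1::finite \<Rightarrow> 'x2::finite \<Rightarrow> 'y::finite \<Rightarrow> real"
  shows "cmi (Om k :: (nat \<times> 'x1 \<times> 'x2 \<times> 'y) set) (jointP p W) (\<lambda>w. (vX1 w, vX2 w)) vY vU = (\<Sum>u<k. G4 W (p u))"
proof -
  have "cmi (Om k :: (nat \<times> 'x1 \<times> 'x2 \<times> 'y) set) (jointP p W) (\<lambda>w. (vX1 w, vX2 w)) vY vU
     = (\<Sum>u<k. cmi UNIV (\<lambda>r. jointP p W (u,r)) (\<lambda>r. (vX1 (u,r), vX2 (u,r))) (\<lambda>r. vY (u,r)) (\<lambda>r. vU (u,r)))"
    unfolding Om_prod by (rule cmi_split[where \<pi>=id]) (auto simp: vU_def)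
  also have "\<dots> = (\<Sum>u<k. G4 W (p u))"
  proof (rule sum.cong[OF refl])
    fix u
    have "cmi (UNIV::('x1 \<times> 'x2 \<times> 'y) set) (Qs W (p u)) (\<lambda>(x1,x2,y). (x1,x2)) (\<lambda>(x1,x2,y). y) (\<lambda>r. (\<lambda>_. u) ((\<lambda>_. ()) r))
       = G4 W (p u)" unfolding G4_def
      by (rule cmi_inj_C[where h="\<lambda>_. u" and C="\<lambda>_. ()"]) (simp add: inj_on_def)
    then show "cmi UNIV (\<lambda>r. jointP p W (u,r)) (\<lambda>r. (vX1 (u,r), vX2 (u,r))) (\<lambda>r. vY (u,r)) (\<lambda>r. vU (u,r)) = G4 W (p u)"
      by (simp add: jointP_slice vX1_def vX2_def vU_def vY_def split_def)
  qed
  finally show ?thesis .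
qed

lemma term5_decomp:
  fixes W :: "'x1::finite \<Rightarrow> 'x2::finite \<Rightarrow> 'y::finite \<Rightarrow> real"
  assumes "k \<ge> 1"
  shows "mi (Om k :: (nat \<times> 'x1 \<times> 'x2 \<times> 'y) set) (jointP p W) (\<lambda>w. (vX1 w, vX2 w)) vY
       = G4 W (\<lambda>a b. \<Sum>u<k. p u a b)"
proof -
  let ?S = "Om k :: (nat \<times> 'x1 \<times> 'x2 \<times> 'y) set"
  have fin: "finite ?S" by (simp add: Om_def)
  have im: "snd ` ?S = UNIV"
  proof -
    have "\<And>r. r \<in> snd ` ?S"
    proof -
      fix r have "(0, r) \<in> ?S" using assms by (simp add: Om_def)
      then show "r \<in> snd ` ?S" by (metis snd_conv image_eqI)
    qed
    then show ?thesis by auto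
  qed
  have "mi ?S (jointP p W) (\<lambda>w. (vX1 w, vX2 w)) vY
      = cmi ?S (jointP p W) (\<lambda>w. (\<lambda>(x1,x2,y). (x1,x2)) (snd w)) (\<lambda>w. (\<lambda>(x1,x2,y). y) (snd w)) (\<lambda>w. (\<lambda>_. ()) (snd w))"
    unfolding mi_def by (simp add: vX1_def vX2_def vY_def split_def)
  also have "\<dots> = cmi UNIV (marg ?S (jointP p W) snd) (\<lambda>(x1,x2,y). (x1,x2)) (\<lambda>(x1,x2,y). y) (\<lambda>_. ())"
    using cmi_push[OF fin, of "jointP p W" "\<lambda>(x1,x2,y). (x1,x2)" snd "\<lambda>(x1,x2,y). y" "\<lambda>_. ()"] im
    by simp
  also have "\<dots> = G4 W (\<lambda>a b. \<Sum>u<k. p u a b)"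
    unfolding G4_def
  proof (rule cmi_cong_P)
    fix r :: "'x1 \<times> 'x2 \<times> 'y"
    obtain a b c where r: "r = (a,b,c)" by (cases r)
    have "{w \<in> ?S. snd w = r} = (\<lambda>u. (u, r)) ` {..<k}" by (auto simp: Om_def)
    then have "marg ?S (jointP p W) snd r = (\<Sum>u<k. jointP p W (u,r))"
      by (simp add: marg_def sum.reindex inj_on_def)
    also have "\<dots> = Qs W (\<lambda>a b. \<Sum>u<k. p u a b) r"
      by (simp add: r jointP_def Qs_def sum_distrib_right)
    finally show "marg ?S (jointP p W) snd r = Qs W (\<lambda>a b. \<Sum>u<k. p u a b) r" .
  qed
  finally show ?thesis .
qed

lemma sum_UNIV3: "(\<Sum>r\<in>(UNIV::('a::finite \<times> 'b::finite \<times> 'c::finite) set). f r)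
   = (\<Sum>a\<in>UNIV. \<Sum>b\<in>UNIV. \<Sum>c\<in>UNIV. f (a,b,c))"
proof -
  have e: "(\<Sum>r\<in>(UNIV::('x \<times> 'z) set). g r) = (\<Sum>a\<in>UNIV. \<Sum>bc\<in>UNIV. g (a,bc))" for g
    using sum.cartesian_product[of "\<lambda>a bc. g (a,bc)" UNIV UNIV] by simp
  show ?thesis by (simp add: e)
qed

lemma sum_if_const: "(\<Sum>x\<in>A. if P then f x else 0) = (if P then sum f A else 0)"
  by simp

definition qY :: "('x1::finite \<Rightarrow> 'x2::finite \<Rightarrow> 'y \<Rightarrow> real) \<Rightarrow> ('x1 \<Rightarrow> 'x2 \<Rightarrow> real) \<Rightarrow> 'y \<Rightarrow> real" where
  "qY W \<pi> c = (\<Sum>a\<in>UNIV. \<Sum>b\<in>UNIV. \<pi> a b * W a b c)"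

definition T5f :: "('x1::finite \<Rightarrow> 'x2::finite \<Rightarrow> 'y::finite \<Rightarrow> real) \<Rightarrow> ('x1 \<Rightarrow> 'x2 \<Rightarrow> real) \<Rightarrow> real" where
  "T5f W \<pi> = (\<Sum>a\<in>UNIV. \<Sum>b\<in>UNIV. \<pi> a b * (\<Sum>c\<in>UNIV. W a b c * log 2 (W a b c)))
     - (\<Sum>c\<in>UNIV. qY W \<pi> c * log 2 (qY W \<pi> c))"

lemma G4_formula:
  fixes W :: "'x1::finite \<Rightarrow> 'x2::finite \<Rightarrow> 'y::finite \<Rightarrow> real"
  assumes mac: "is_mac W" and nn: "\<And>a b. \<pi> a b \<ge> 0" and s1: "(\<Sum>a\<in>UNIV. \<Sum>b\<in>UNIV. \<pi> a b) = 1"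
  shows "G4 W \<pi> = T5f W \<pi>"
proof -
  let ?Q = "Qs W \<pi>"
  let ?g = "\<lambda>r::'x1\<times>'x2\<times>'y. ((\<lambda>(x1,x2,y). (x1,x2)) r, (\<lambda>(x1,x2,y). y) r, ())"
  have W0: "\<And>a b c. W a b c \<ge> 0" and W1: "\<And>a b. (\<Sum>c\<in>UNIV. W a b c) = 1"
    using mac by (auto simp: is_mac_def)
  have inj: "inj ?g" by (auto simp: inj_on_def)
  have m1: "marg UNIV ?Q ?g (?g r) = ?Q r" for r
  proof -
    have "{w \<in> UNIV. ?g w = ?g r} = {r}" by (cases r) (auto simp: inj_eq[OF inj])
    then show ?thesis by (simp add: marg_def)
  qed
  have m2: "marg UNIV ?Q (\<lambda>_. ()) () = 1"
    by (simp add: marg_def sum_UNIV3 Qs_def sum_distrib_left[symmetric] W1 s1)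
  have m3: "marg UNIV ?Q (\<lambda>r. ((\<lambda>(x1,x2,y). (x1,x2)) r, ())) ((a,b),()) = \<pi> a b" for a b
  proof -
    have "marg UNIV ?Q (\<lambda>r. ((\<lambda>(x1,x2,y). (x1,x2)) r, ())) ((a,b),())
       = (\<Sum>aa\<in>UNIV. \<Sum>ba\<in>UNIV. \<Sum>c\<in>UNIV. if aa = a then (if ba = b then ?Q (aa,ba,c) else 0) else 0)"
      unfolding marg_def sum.inter_filter[OF finite] sum_UNIV3 by (intro sum.cong) auto
    also have "\<dots> = \<pi> a b"
      by (simp only: sum_if_const) (simp add: Qs_def sum_distrib_left[symmetric] W1)
    finally show ?thesis .
  qed
  have m4: "marg UNIV ?Q (\<lambda>r. ((\<lambda>(x1,x2,y). y) r, ())) (c,()) = qY W \<pi> c" for c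
    unfolding marg_def sum.inter_filter[OF finite] sum_UNIV3
    by (simp add: Qs_def qY_def)
  have qge: "qY W \<pi> c \<ge> \<pi> a b * W a b c" for a b c
  proof -
    have "\<pi> a b * W a b c \<le> (\<Sum>b'\<in>UNIV. \<pi> a b' * W a b' c)"
      by (rule member_le_sum) (auto intro: mult_nonneg_nonneg nn W0)
    also have "\<dots> \<le> (\<Sum>a'\<in>UNIV. \<Sum>b'\<in>UNIV. \<pi> a' b' * W a' b' c)"
      by (rule member_le_sum[where f="\<lambda>a'. \<Sum>b'\<in>UNIV. \<pi> a' b' * W a' b' c"])
         (auto intro!: sum_nonneg mult_nonneg_nonneg nn W0)
    finally show ?thesis by (simp add: qY_def)
  qed
  have tm: "\<pi> a b * W a b c * log 2 (\<pi> a b * W a b c * 1 / (\<pi> a b * qY W \<pi> c))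
      = \<pi> a b * (W a b c * log 2 (W a b c)) - \<pi> a b * W a b c * log 2 (qY W \<pi> c)" for a b c
  proof (cases "\<pi> a b * W a b c = 0")
    case True then show ?thesis by auto
  next
    case False
    then have p: "\<pi> a b > 0" "W a b c > 0" using nn[of a b] W0[of a b c]
      by (auto simp: less_le)
    then have q: "qY W \<pi> c > 0" using qge[of a b c] by (smt (verit) mult_pos_pos)
    have "\<pi> a b * W a b c * 1 / (\<pi> a b * qY W \<pi> c) = W a b c / qY W \<pi> c" using p by simp
    then show ?thesis using p q by (simp add: log_divide algebra_simps)
  qed
  have "G4 W \<pi> = (\<Sum>r\<in>UNIV. (case ?g r of (a, b, c) \<Rightarrow>
          marg UNIV ?Q ?g (a, b, c) *
          log 2 (marg UNIV ?Q ?g (a, b, c) * marg UNIV ?Q (\<lambda>_. ()) c /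
            (marg UNIV ?Q (\<lambda>r. ((\<lambda>(x1,x2,y). (x1,x2)) r, ())) (a, c) *
             marg UNIV ?Q (\<lambda>r. ((\<lambda>(x1,x2,y). y) r, ())) (b, c)))))"
    unfolding G4_def cmi_def sum.reindex[OF inj, unfolded comp_def] by simp
  also have "\<dots> = (\<Sum>r\<in>UNIV. (case r of (a,b,c) \<Rightarrow>
        \<pi> a b * (W a b c * log 2 (W a b c)) - \<pi> a b * W a b c * log 2 (qY W \<pi> c)))"
  proof (rule sum.cong[OF refl])
    fix r :: "'x1\<times>'x2\<times>'y"
    obtain a b c where r: "r = (a,b,c)" by (cases r)
    show "(case ?g r of (a, b, c) \<Rightarrow>
          marg UNIV ?Q ?g (a, b, c) *
          log 2 (marg UNIV ?Q ?g (a, b, c) * marg UNIV ?Q (\<lambda>_. ()) c /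
            (marg UNIV ?Q (\<lambda>r. ((\<lambda>(x1,x2,y). (x1,x2)) r, ())) (a, c) *
             marg UNIV ?Q (\<lambda>r. ((\<lambda>(x1,x2,y). y) r, ())) (b, c)))) =
        (case r of (a,b,c) \<Rightarrow>
        \<pi> a b * (W a b c * log 2 (W a b c)) - \<pi> a b * W a b c * log 2 (qY W \<pi> c))"
      using m1[of r] m2 m3[of a b] m4[of c] tm[of a b c] by (simp add: r Qs_def)
  qed
  also have "\<dots> = T5f W \<pi>"
    by (simp add: sum_UNIV3 T5f_def sum_subtractf sum_distrib_left qY_def sum_distrib_right
        mult.assoc sum.swap[where A=UNIV and B="UNIV::'y set"])
  finally show ?thesis .
qed

lemma xlog_key:
  fixes t a :: real
  assumes "t \<ge> 0" "a > 0"
  shows "t * log 2 t - t * log 2 a \<ge> (t - a) / ln 2"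
proof (cases "t = 0")
  case True then show ?thesis using assms by simp
next
  case False
  then have t: "t > 0" using assms by simp
  have "ln (a / t) \<le> a / t - 1" by (rule ln_le_minus_one) (use t assms in simp)
  then have "ln a - ln t \<le> a / t - 1" using t assms by (simp add: ln_div)
  then have "t * (ln a - ln t) \<le> t * (a / t - 1)" using t by (simp add: mult_left_mono)
  then have "t * ln t - t * ln a \<ge> t - a" using t by (simp add: algebra_simps)
  then have "(t * ln t - t * ln a) / ln 2 \<ge> (t - a) / ln 2" by (simp add: divide_right_mono)
  then show ?thesis by (simp add: log_def diff_divide_distrib)
qed

lemma xlog_convex:
  fixes t s l :: real
  assumes "t \<ge> 0" "s \<ge> 0" "0 \<le> l" "l \<le> 1"
  shows "(l * t + (1 - l) * s) * log 2 (l * t + (1 - l) * s) \<le> l * (t * log 2 t) + (1 - l) * (s * log 2 s)"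
proof -
  let ?a = "l * t + (1 - l) * s"
  have a0: "?a \<ge> 0" using assms by simp
  show ?thesis
  proof (cases "?a = 0")
    case True
    then have "l * t = 0" "(1 - l) * s = 0" using assms by (smt (verit) mult_nonneg_nonneg)+
    then have z1: "l * (t * log 2 t) = 0" and z2: "(1 - l) * (s * log 2 s) = 0" by auto
    show ?thesis by (simp only: True z1 z2)
  next
    case False
    then have a: "?a > 0" using a0 by simp
    have "l * (t * log 2 t - t * log 2 ?a) \<ge> l * ((t - ?a) / ln 2)"
      by (rule mult_left_mono[OF xlog_key[OF assms(1) a]]) (use assms in simp)
    moreover have "(1 - l) * (s * log 2 s - s * log 2 ?a) \<ge> (1 - l) * ((s - ?a) / ln 2)"
      by (rule mult_left_mono[OF xlog_key[OF assms(2) a]]) (use assms in simp)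
    moreover have "l * ((t - ?a) / ln 2) + (1 - l) * ((s - ?a) / ln 2) = (l * (t - ?a) + (1 - l) * (s - ?a)) / ln 2"
      by (simp add: add_divide_distrib)
    moreover have "l * (t - ?a) + (1 - l) * (s - ?a) = 0" by (simp add: algebra_simps)
    ultimately show ?thesis by (simp add: algebra_simps)
  qed
qed

lemma xlog_lower:
  fixes t :: real
  assumes "t \<ge> 0"
  shows "- (t * log 2 t) \<le> 1 / ln 2"
proof -
  have "t * log 2 t - t * log 2 1 \<ge> (t - 1) / ln 2" by (rule xlog_key[OF assms]) simp
  moreover have "(1 - t) / ln 2 = - ((t - 1) / ln 2)" by (simp add: minus_divide_left)
  ultimately have "- (t * log 2 t) \<le> (1 - t) / ln 2" by simp
  also have "\<dots> \<le> 1 / ln 2" using assms by (simp add: divide_right_mono)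
  finally show ?thesis .
qed

lemma qY_nonneg:
  assumes "is_mac W" "\<And>a b. \<pi> a b \<ge> 0"
  shows "qY W \<pi> c \<ge> 0"
  using assms unfolding qY_def is_mac_def by (auto intro!: sum_nonneg mult_nonneg_nonneg)

lemma qY_mix: "qY W (\<lambda>a b. l * \<pi> a b + (1 - l) * \<pi>' a b) c = l * qY W \<pi> c + (1 - l) * qY W \<pi>' c"
  unfolding qY_def sum_distrib_left sum.distrib[symmetric]
  by (intro sum.cong refl) (simp add: algebra_simps)

lemma T5f_concave:
  assumes mac: "is_mac W" and nn: "\<And>a b. \<pi> a b \<ge> 0" and nn': "\<And>a b. \<pi>' a b \<ge> 0"
    and l: "0 \<le> l" "l \<le> 1"
  shows "T5f W (\<lambda>a b. l * \<pi> a b + (1 - l) * \<pi>' a b) \<ge> l * T5f W \<pi> + (1 - l) * T5f W \<pi>'"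
proof -
  let ?K = "\<lambda>a b. (\<Sum>c\<in>UNIV. W a b c * log 2 (W a b c))"
  have lin: "(\<Sum>a\<in>UNIV. \<Sum>b\<in>UNIV. (l * \<pi> a b + (1 - l) * \<pi>' a b) * ?K a b)
     = l * (\<Sum>a\<in>UNIV. \<Sum>b\<in>UNIV. \<pi> a b * ?K a b) + (1 - l) * (\<Sum>a\<in>UNIV. \<Sum>b\<in>UNIV. \<pi>' a b * ?K a b)"
    unfolding sum_distrib_left sum.distrib[symmetric]
    by (intro sum.cong refl) (simp add: algebra_simps)
  have ent: "(\<Sum>c\<in>UNIV. qY W (\<lambda>a b. l * \<pi> a b + (1 - l) * \<pi>' a b) c * log 2 (qY W (\<lambda>a b. l * \<pi> a b + (1 - l) * \<pi>' a b) c))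
     \<le> l * (\<Sum>c\<in>UNIV. qY W \<pi> c * log 2 (qY W \<pi> c)) + (1 - l) * (\<Sum>c\<in>UNIV. qY W \<pi>' c * log 2 (qY W \<pi>' c))"
    unfolding qY_mix sum_distrib_left sum.distrib[symmetric]
    by (rule sum_mono, rule xlog_convex) (use qY_nonneg[OF mac nn] qY_nonneg[OF mac nn'] l in auto)
  show ?thesis unfolding T5f_def using lin ent by (simp add: algebra_simps)
qed

lemma T5f_bound:
  fixes W :: "'x1::finite \<Rightarrow> 'x2::finite \<Rightarrow> 'y::finite \<Rightarrow> real"
  assumes mac: "is_mac W" and nn: "\<And>a b. \<pi> a b \<ge> 0"
  shows "T5f W \<pi> \<le> real CARD('y) / ln 2"
proof -
  have W0: "\<And>a b c. W a b c \<ge> 0" and W1: "\<And>a b. (\<Sum>c\<in>UNIV. W a b c) = 1"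
    using mac by (auto simp: is_mac_def)
  have Wle: "W a b c \<le> 1" for a b c
    using member_le_sum[of c UNIV "W a b"] W0 W1[of a b] by simp
  have "W a b c * log 2 (W a b c) \<le> 0" for a b c
  proof (cases "W a b c = 0")
    case False
    then have "W a b c > 0" using W0[of a b c] by simp
    then have "log 2 (W a b c) \<le> 0" using Wle[of a b c] by simp
    then show ?thesis using W0[of a b c] by (simp add: mult_nonneg_nonpos)
  qed simp
  note that = this
  have p1: "(\<Sum>a\<in>UNIV. \<Sum>b\<in>UNIV. \<pi> a b * (\<Sum>c\<in>UNIV. W a b c * log 2 (W a b c))) \<le> 0"
    by (intro sum_nonpos mult_nonneg_nonpos[OF nn]) (use that in auto)
  have p2: "- (\<Sum>c\<in>UNIV. qY W \<pi> c * log 2 (qY W \<pi> c)) \<le> (\<Sum>c\<in>(UNIV::'y set). 1 / ln 2)"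
    unfolding sum_negf[symmetric] by (rule sum_mono, rule xlog_lower, rule qY_nonneg[OF mac nn])
  show ?thesis using p1 p2 unfolding T5f_def by simp
qed

lemma dep_family:
  fixes a :: "nat \<Rightarrow> 'v::euclidean_space"
  assumes fS: "finite S" and big: "card S > DIM('v)"
  shows "\<exists>v. (\<forall>u. u \<notin> S \<longrightarrow> v u = 0) \<and> (\<exists>u\<in>S. v u \<noteq> 0) \<and> (\<Sum>u\<in>S. v u *\<^sub>R a u) = 0"
proof (cases "inj_on a S")
  case False
  then obtain x y where xy: "x \<in> S" "y \<in> S" "x \<noteq> y" "a x = a y" by (auto simp: inj_on_def)
  define v where "v u = (if u = x then 1 else if u = y then -1 else 0 :: real)" for u
  have "(\<Sum>u\<in>S. v u *\<^sub>R a u) = (\<Sum>u\<in>S. (if u = x then a u else 0) - (if u = y then a u else 0))"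
    by (rule sum.cong) (auto simp: v_def xy)
  also have "\<dots> = 0" using xy fS by (simp add: sum_subtractf)
  finally show ?thesis using xy by (intro exI[of _ v]) (auto simp: v_def)
next
  case True
  then have "card (a ` S) > DIM('v)" using big by (simp add: card_image)
  then have "dependent (a ` S)" using dependent_biggerset by blast
  then obtain T c where T: "finite T" "T \<subseteq> a ` S" "(\<Sum>x\<in>T. c x *\<^sub>R x) = 0" "\<exists>x\<in>T. c x \<noteq> 0"
    unfolding dependent_explicit by blast
  define v where "v i = (if i \<in> S \<and> a i \<in> T then c (a i) else 0)" for i
  let ?S' = "{i\<in>S. a i \<in> T}"
  have img: "a ` ?S' = T" using T(2) by auto
  have inj': "inj_on a ?S'" using True by (auto simp: inj_on_def)
  have "(\<Sum>u\<in>S. v u *\<^sub>R a u) = (\<Sum>u\<in>?S'. c (a u) *\<^sub>R a u)"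
    unfolding v_def by (rule sum.mono_neutral_cong_right) (use fS in auto)
  also have "\<dots> = (\<Sum>x\<in>T. c x *\<^sub>R x)"
    using sum.reindex[OF inj', of "\<lambda>x. c x *\<^sub>R x"] img by simp
  finally have s0: "(\<Sum>u\<in>S. v u *\<^sub>R a u) = 0" using T(3) by simp
  obtain x where x: "x \<in> T" "c x \<noteq> 0" using T(4) by blast
  then obtain i where i: "i \<in> S" "a i = x" using T(2) by blast
  have vi: "v i \<noteq> 0" using i x by (simp add: v_def)
  have v0: "\<forall>u. u \<notin> S \<longrightarrow> v u = 0" by (simp add: v_def)
  show ?thesis using s0 i vi v0 by blast
qed

lemma absred_gen:
  fixes a :: "nat \<Rightarrow> 'v::euclidean_space"
  assumes fin: "finite I" and mpos: "\<And>u. u \<in> I \<Longrightarrow> m u > 0"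
    and lin: "\<And>v. (\<Sum>u\<in>I. v u *\<^sub>R a u) = 0 \<Longrightarrow> (\<Sum>u\<in>I. v u * m u) = 0"
  shows "\<forall>\<alpha>. (\<forall>u\<in>I. \<alpha> u \<ge> 0) \<and> card {u\<in>I. \<alpha> u \<noteq> 0} = n \<longrightarrow>
     (\<exists>\<beta>. (\<forall>u\<in>I. \<beta> u \<ge> 0) \<and> (\<Sum>u\<in>I. \<beta> u *\<^sub>R a u) = (\<Sum>u\<in>I. \<alpha> u *\<^sub>R a u)
        \<and> (\<Sum>u\<in>I. \<beta> u * g u) \<ge> (\<Sum>u\<in>I. \<alpha> u * g u) \<and> card {u\<in>I. \<beta> u \<noteq> 0} \<le> DIM('v))"
proof (induction n rule: less_induct)
  case (less n)
  show ?case
  proof (intro allI impI)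
    fix \<alpha> :: "nat \<Rightarrow> real"
    assume H: "(\<forall>u\<in>I. \<alpha> u \<ge> 0) \<and> card {u\<in>I. \<alpha> u \<noteq> 0} = n"
    let ?S = "{u\<in>I. \<alpha> u \<noteq> 0}"
    have fS: "finite ?S" using fin by simp
    show "\<exists>\<beta>. (\<forall>u\<in>I. \<beta> u \<ge> 0) \<and> (\<Sum>u\<in>I. \<beta> u *\<^sub>R a u) = (\<Sum>u\<in>I. \<alpha> u *\<^sub>R a u)
        \<and> (\<Sum>u\<in>I. \<beta> u * g u) \<ge> (\<Sum>u\<in>I. \<alpha> u * g u) \<and> card {u\<in>I. \<beta> u \<noteq> 0} \<le> DIM('v)"
    proof (cases "card ?S \<le> DIM('v)")
      case True then show ?thesis using H by (intro exI[of _ \<alpha>]) auto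
    next
      case False
      then obtain v where v: "\<forall>u. u \<notin> ?S \<longrightarrow> v u = 0" "\<exists>u\<in>?S. v u \<noteq> 0" "(\<Sum>u\<in>?S. v u *\<^sub>R a u) = 0"
        using dep_family[OF fS, of a] by auto
      have vI: "(\<Sum>u\<in>I. v u *\<^sub>R a u) = 0"
        using v(3) sum.mono_neutral_left[OF fin, of ?S "\<lambda>u. v u *\<^sub>R a u"] v(1) by auto
      define v' where "v' = (if (\<Sum>u\<in>I. v u * g u) \<ge> 0 then v else (\<lambda>u. - v u))"
      have v'0: "\<forall>u. u \<notin> ?S \<longrightarrow> v' u = 0" using v(1) by (auto simp: v'_def)
      have v'1: "\<exists>u\<in>?S. v' u \<noteq> 0" using v(2) by (auto simp: v'_def)
      have v'a: "(\<Sum>u\<in>I. v' u *\<^sub>R a u) = 0" using vI by (auto simp: v'_def sum_negf)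
      have v'g: "(\<Sum>u\<in>I. v' u * g u) \<ge> 0" by (auto simp: v'_def sum_negf)
      have v'm: "(\<Sum>u\<in>I. v' u * m u) = 0" using lin[OF v'a] .
      have "\<exists>u\<in>?S. v' u < 0"
      proof (rule ccontr)
        assume neg: "\<not> (\<exists>u\<in>?S. v' u < 0)"
        have "\<forall>u\<in>I. v' u \<ge> 0"
        proof
          fix u assume u: "u \<in> I"
          show "v' u \<ge> 0"
          proof (cases "u \<in> ?S")
            case True
            have "\<not> v' u < 0" using neg True by blast
            then show ?thesis by simp
          next
            case False then show ?thesis using v'0 by simp
          qed
        qed
        then have nn: "\<forall>u\<in>I. v' u * m u \<ge> 0" using mpos by (simp add: less_imp_le)
        then have z: "\<forall>u\<in>I. v' u * m u = 0"
          using sum_nonneg_eq_0_iff[OF fin, of "\<lambda>u. v' u * m u"] v'm by simp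
        have "\<forall>u\<in>I. v' u = 0"
        proof
          fix u assume u: "u \<in> I"
          have "v' u * m u = 0" "m u > 0" using z u mpos by auto
          then show "v' u = 0" by simp
        qed
        then show False using v'1 by auto
      qed
      let ?N = "{u\<in>?S. v' u < 0}"
      have fN: "finite ?N" using fin by simp
      have neN: "?N \<noteq> {}" using \<open>\<exists>u\<in>?S. v' u < 0\<close> by blast
      define t where "t = Min ((\<lambda>u. \<alpha> u / (- v' u)) ` ?N)"
      have "t \<in> (\<lambda>u. \<alpha> u / (- v' u)) ` ?N" unfolding t_def using fN neN by (intro Min_in) auto
      then obtain u0 where u0: "u0 \<in> ?N" "t = \<alpha> u0 / (- v' u0)" by blast
      have tle: "t \<le> \<alpha> u / (- v' u)" if "u \<in> ?N" for u
        unfolding t_def using fN that by (intro Min_le) auto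
      have apos: "\<alpha> u > 0" if "u \<in> ?S" for u using H that by (auto simp: less_le)
      have t0: "t > 0"
      proof -
        have "\<alpha> u0 > 0" "- v' u0 > 0" using u0 apos by auto
        then show ?thesis by (simp only: u0(2)) (rule divide_pos_pos)
      qed
      define \<beta>' where "\<beta>' u = \<alpha> u + t * v' u" for u
      have b0: "\<forall>u\<in>I. \<beta>' u \<ge> 0"
      proof
        fix u assume u: "u \<in> I"
        show "\<beta>' u \<ge> 0"
        proof (cases "u \<in> ?N")
          case True
          have d: "- v' u > 0" using True by simp
          have "t * (- v' u) \<le> \<alpha> u" using tle[OF True] by (simp only: pos_le_divide_eq[OF d])
          then show ?thesis by (simp add: \<beta>'_def)
        next
          case False
          then have "v' u \<ge> 0" using v'0 u by force
          then show ?thesis using H u t0 by (simp add: \<beta>'_def)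
        qed
      qed
      have bu0: "\<beta>' u0 = 0" using u0 by (simp add: \<beta>'_def field_simps)
      have sub: "{u\<in>I. \<beta>' u \<noteq> 0} \<subseteq> ?S - {u0}"
        using v'0 bu0 by (auto simp: \<beta>'_def)
      have "card {u\<in>I. \<beta>' u \<noteq> 0} \<le> card (?S - {u0})" by (rule card_mono) (use fS sub in auto)
      also have "\<dots> < card ?S" using u0 fS by (intro card_Diff1_less) auto
      finally have lt: "card {u\<in>I. \<beta>' u \<noteq> 0} < n" using H by simp
      have ba: "(\<Sum>u\<in>I. \<beta>' u *\<^sub>R a u) = (\<Sum>u\<in>I. \<alpha> u *\<^sub>R a u)"
      proof -
        have "(\<Sum>u\<in>I. \<beta>' u *\<^sub>R a u) = (\<Sum>u\<in>I. \<alpha> u *\<^sub>R a u + t *\<^sub>R (v' u *\<^sub>R a u))"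
          by (rule sum.cong) (simp_all add: \<beta>'_def scaleR_add_left)
        also have "\<dots> = (\<Sum>u\<in>I. \<alpha> u *\<^sub>R a u) + t *\<^sub>R (\<Sum>u\<in>I. v' u *\<^sub>R a u)"
          by (simp add: sum.distrib scaleR_right.sum)
        finally show ?thesis using v'a by simp
      qed
      have bg: "(\<Sum>u\<in>I. \<beta>' u * g u) \<ge> (\<Sum>u\<in>I. \<alpha> u * g u)"
      proof -
        have "(\<Sum>u\<in>I. \<beta>' u * g u) = (\<Sum>u\<in>I. \<alpha> u * g u) + t * (\<Sum>u\<in>I. v' u * g u)"
          by (simp add: \<beta>'_def algebra_simps sum.distrib sum_distrib_left)
        then show ?thesis using v'g t0 by simp
      qed
      obtain \<beta> where \<beta>: "(\<forall>u\<in>I. \<beta> u \<ge> 0)" "(\<Sum>u\<in>I. \<beta> u *\<^sub>R a u) = (\<Sum>u\<in>I. \<beta>' u *\<^sub>R a u)"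
        "(\<Sum>u\<in>I. \<beta> u * g u) \<ge> (\<Sum>u\<in>I. \<beta>' u * g u)" "card {u\<in>I. \<beta> u \<noteq> 0} \<le> DIM('v)"
        using less[OF lt] b0 by blast
      show ?thesis using \<beta> ba bg by (intro exI[of _ \<beta>]) auto
    qed
  qed
qed

definition obj5 :: "real \<Rightarrow> real \<Rightarrow> real \<Rightarrow> real \<Rightarrow> real \<Rightarrow> real \<Rightarrow> real \<Rightarrow> real" where
  "obj5 C1 C2 g1 g2 g3 g4 t = Min {C1 + C2 - g1, C2 + g2, C1 + g3, (C1 + C2 + g4 - g1) / 2, t}"

lemma obj5_min: "obj5 C1 C2 g1 g2 g3 g4 t =
   min (C1 + C2 - g1) (min (C2 + g2) (min (C1 + g3) (min ((C1 + C2 + g4 - g1) / 2) t)))"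
  unfolding obj5_def by simp

lemma obj5_mono:
  assumes "g1' \<le> g1" "g2 \<le> g2'" "g3 \<le> g3'" "g4 - g1 \<le> g4' - g1'" "t \<le> t'"
  shows "obj5 C1 C2 g1 g2 g3 g4 t \<le> obj5 C1 C2 g1' g2' g3' g4' t'"
  unfolding obj5_min using assms
  by (intro min.mono) (auto simp: divide_right_mono)

lemma obj5_le_t: "obj5 C1 C2 g1 g2 g3 g4 t \<le> t"
  unfolding obj5_min by simp

lemma obj5_concave:
  assumes l: "0 \<le> l" "l \<le> 1" and tt: "t'' \<ge> l * t + (1 - l) * t'"
  shows "obj5 (l * C1 + (1 - l) * C1') (l * C2 + (1 - l) * C2')
      (l * g1 + (1 - l) * g1') (l * g2 + (1 - l) * g2') (l * g3 + (1 - l) * g3') (l * g4 + (1 - l) * g4') t''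
    \<ge> l * obj5 C1 C2 g1 g2 g3 g4 t + (1 - l) * obj5 C1' C2' g1' g2' g3' g4' t'"
proof -
  let ?A = "obj5 C1 C2 g1 g2 g3 g4 t" and ?B = "obj5 C1' C2' g1' g2' g3' g4' t'"
  have A: "?A \<le> C1 + C2 - g1" "?A \<le> C2 + g2" "?A \<le> C1 + g3" "?A \<le> (C1 + C2 + g4 - g1) / 2" "?A \<le> t"
    unfolding obj5_min by linarith+
  have B: "?B \<le> C1' + C2' - g1'" "?B \<le> C2' + g2'" "?B \<le> C1' + g3'" "?B \<le> (C1' + C2' + g4' - g1') / 2" "?B \<le> t'"
    unfolding obj5_min by linarith+
  have l1: "0 \<le> 1 - l" using l by simp
  have c: "l * X + (1 - l) * Y \<le> l * X' + (1 - l) * Y'" if "X \<le> X'" "Y \<le> Y'" for X Y X' Y' :: real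
    using mult_left_mono[OF that(1) l(1)] mult_left_mono[OF that(2) l1] by simp
  show ?thesis unfolding obj5_min[of "l * C1 + (1 - l) * C1'"]
    using c[OF A(1) B(1)] c[OF A(2) B(2)] c[OF A(3) B(3)] c[OF A(4) B(4)] c[OF A(5) B(5)] tt
    by (simp add: algebra_simps add_divide_distrib diff_divide_distrib)
qed

lemma f_obj_eq:
  fixes W :: "'x1::finite \<Rightarrow> 'x2::finite \<Rightarrow> 'y::finite \<Rightarrow> real"
  assumes "k \<ge> 1"
  shows "f_obj W k p C1 C2 = obj5 C1 C2 (\<Sum>u<k. G1 W (p u)) (\<Sum>u<k. G2 W (p u)) (\<Sum>u<k. G3 W (p u))
     (\<Sum>u<k. G4 W (p u)) (G4 W (\<lambda>a b. \<Sum>u<k. p u a b))"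
  unfolding f_obj_def Let_def obj5_def
  by (simp only: term1_decomp term2_decomp term3_decomp term4_decomp term5_decomp[OF assms])



definition mass :: "('x1::finite \<Rightarrow> 'x2::finite \<Rightarrow> real) \<Rightarrow> real" where
  "mass s = (\<Sum>a\<in>UNIV. \<Sum>b\<in>UNIV. s a b)"

lemma reduce_core:
  fixes W :: "'x1::finite \<Rightarrow> 'x2::finite \<Rightarrow> 'y::finite \<Rightarrow> real"
    and q :: "nat \<Rightarrow> 'x1 \<Rightarrow> 'x2 \<Rightarrow> real"
  assumes pmf: "is_pmf_ux N q" and N1: "N \<ge> 1"
    and IN: "I \<subseteq> {..<N}" and out: "\<And>u. u < N \<Longrightarrow> u \<notin> I \<Longrightarrow> q u = (\<lambda>a b. 0)"
    and b0: "\<And>u. u \<in> I \<Longrightarrow> \<beta> u \<ge> 0"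
    and h1: "(\<Sum>u\<in>I. \<beta> u * G1 W (q u)) \<le> (\<Sum>u\<in>I. G1 W (q u))"
    and h2: "(\<Sum>u\<in>I. \<beta> u * G2 W (q u)) \<ge> (\<Sum>u\<in>I. G2 W (q u))"
    and h3: "(\<Sum>u\<in>I. \<beta> u * G3 W (q u)) \<ge> (\<Sum>u\<in>I. G3 W (q u))"
    and h4: "(\<Sum>u\<in>I. \<beta> u * G4 W (q u)) - (\<Sum>u\<in>I. \<beta> u * G1 W (q u))
           \<ge> (\<Sum>u\<in>I. G4 W (q u)) - (\<Sum>u\<in>I. G1 W (q u))"
    and h5: "G4 W (\<lambda>a b. \<Sum>u\<in>I. \<beta> u * q u a b) \<ge> G4 W (\<lambda>a b. \<Sum>u<N. q u a b)"
    and hs: "(\<Sum>u\<in>I. \<beta> u * mass (q u)) = 1"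
    and hc: "card {u\<in>I. \<beta> u \<noteq> 0} \<le> U_bound W"
  shows "\<exists>k r. 1 \<le> k \<and> k \<le> U_bound W \<and> is_pmf_ux k r \<and> (\<forall>C1 C2. f_obj W N q C1 C2 \<le> f_obj W k r C1 C2)"
proof -
  let ?S = "{u\<in>I. \<beta> u \<noteq> 0}"
  define n where "n = card ?S"
  have fI: "finite I" using IN finite_subset by blast
  have fS: "finite ?S" using fI by simp
  obtain e where e: "bij_betw e {..<n} ?S"
    using ex_bij_betw_nat_finite[OF fS] unfolding n_def atLeast0LessThan by blast
  define r where "r i = (\<lambda>a b. if i < n then \<beta> (e i) * q (e i) a b else 0)" for i
  have eS: "e i \<in> ?S" if "i < n" for i using e that by (auto simp: bij_betw_def)
  have reidx: "(\<Sum>i<n. F (e i)) = (\<Sum>u\<in>?S. F u)" for F :: "nat \<Rightarrow> real"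
    using sum.reindex_bij_betw[OF e, of F] by simp
  have StoI: "(\<Sum>u\<in>?S. \<beta> u * F u) = (\<Sum>u\<in>I. \<beta> u * F u)" for F :: "nat \<Rightarrow> real"
    by (rule sum.mono_neutral_left) (use fI in auto)
  have qnn: "q u a b \<ge> 0" for u a b using pmf by (simp add: is_pmf_ux_def)
  have Gr: "(\<Sum>i<n. G (r i)) = (\<Sum>u\<in>I. \<beta> u * G (q u))"
    if Gs: "\<And>c s. c \<ge> 0 \<Longrightarrow> G (\<lambda>a b. c * s a b) = c * G s" for G
  proof -
    have "(\<Sum>i<n. G (r i)) = (\<Sum>i<n. \<beta> (e i) * G (q (e i)))"
    proof (rule sum.cong[OF refl])
      fix i assume "i \<in> {..<n}"
      then have i: "i < n" by simp
      then have "r i = (\<lambda>a b. \<beta> (e i) * q (e i) a b)" by (simp add: r_def)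
      moreover have "\<beta> (e i) \<ge> 0" using eS[OF i] b0 by auto
      ultimately show "G (r i) = \<beta> (e i) * G (q (e i))" using Gs by simp
    qed
    also have "\<dots> = (\<Sum>u\<in>I. \<beta> u * G (q u))"
      using reidx[of "\<lambda>u. \<beta> u * G (q u)"] StoI[of "\<lambda>u. G (q u)"] by simp
    finally show ?thesis .
  qed
  have Gq: "(\<Sum>u<N. G (q u)) = (\<Sum>u\<in>I. G (q u))" if Gz: "G (\<lambda>a b. 0) = 0" for G
    by (rule sum.mono_neutral_right) (use IN out Gz in auto)
  have pir: "(\<lambda>a b. \<Sum>i<n. r i a b) = (\<lambda>a b. \<Sum>u\<in>I. \<beta> u * q u a b)"
  proof (intro ext)
    fix a b
    have "(\<Sum>i<n. r i a b) = (\<Sum>i<n. \<beta> (e i) * q (e i) a b)" by (simp add: r_def)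
    also have "\<dots> = (\<Sum>u\<in>I. \<beta> u * q u a b)"
      using reidx[of "\<lambda>u. \<beta> u * q u a b"] StoI[of "\<lambda>u. q u a b"] by simp
    finally show "(\<Sum>i<n. r i a b) = (\<Sum>u\<in>I. \<beta> u * q u a b)" .
  qed
  have sum_r: "(\<Sum>i<n. \<Sum>a\<in>UNIV. \<Sum>b\<in>UNIV. r i a b) = 1"
  proof -
    have "(\<Sum>i<n. \<Sum>a\<in>UNIV. \<Sum>b\<in>UNIV. r i a b) = (\<Sum>a\<in>UNIV. \<Sum>b\<in>UNIV. \<Sum>i<n. r i a b)"
      by (simp add: sum.swap[of _ "{..<n}"])
    also have "\<dots> = (\<Sum>a\<in>UNIV. \<Sum>b\<in>UNIV. \<Sum>u\<in>I. \<beta> u * q u a b)"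
      using pir by (simp add: fun_eq_iff)
    also have "\<dots> = (\<Sum>u\<in>I. \<beta> u * mass (q u))"
      by (simp add: mass_def sum_distrib_left sum.swap[of _ I])
    finally show ?thesis using hs by simp
  qed
  have n1: "n \<ge> 1"
  proof (rule ccontr)
    assume "\<not> n \<ge> 1" then have "n = 0" by simp
    then show False using sum_r by simp
  qed
  have pmf_r: "is_pmf_ux n r"
    unfolding is_pmf_ux_def
  proof (intro conjI allI impI)
    fix u a b show "0 \<le> r u a b"
      using b0 eS qnn by (auto simp: r_def intro!: mult_nonneg_nonneg)
  next
    fix u a b assume "n \<le> u" then show "r u a b = 0" by (simp add: r_def)
  next
    show "(\<Sum>u<n. \<Sum>a\<in>UNIV. \<Sum>b\<in>UNIV. r u a b) = 1" by (rule sum_r)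
  qed
  have nb: "n \<le> U_bound W" using hc n_def by simp
  have obj: "f_obj W N q C1 C2 \<le> f_obj W n r C1 C2" for C1 C2
  proof -
    have E1: "(\<Sum>i<n. G1 W (r i)) = (\<Sum>u\<in>I. \<beta> u * G1 W (q u))" by (rule Gr) (rule G_scale)
    have E2: "(\<Sum>i<n. G2 W (r i)) = (\<Sum>u\<in>I. \<beta> u * G2 W (q u))" by (rule Gr) (rule G_scale)
    have E3: "(\<Sum>i<n. G3 W (r i)) = (\<Sum>u\<in>I. \<beta> u * G3 W (q u))" by (rule Gr) (rule G_scale)
    have E4: "(\<Sum>i<n. G4 W (r i)) = (\<Sum>u\<in>I. \<beta> u * G4 W (q u))" by (rule Gr) (rule G_scale)
    have F1: "(\<Sum>u<N. G1 W (q u)) = (\<Sum>u\<in>I. G1 W (q u))" by (rule Gq) (rule G_zero)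
    have F2: "(\<Sum>u<N. G2 W (q u)) = (\<Sum>u\<in>I. G2 W (q u))" by (rule Gq) (rule G_zero)
    have F3: "(\<Sum>u<N. G3 W (q u)) = (\<Sum>u\<in>I. G3 W (q u))" by (rule Gq) (rule G_zero)
    have F4: "(\<Sum>u<N. G4 W (q u)) = (\<Sum>u\<in>I. G4 W (q u))" by (rule Gq) (rule G_zero)
    show ?thesis
      unfolding f_obj_eq[OF N1] f_obj_eq[OF n1] E1 E2 E3 E4 F1 F2 F3 F4 pir
      by (rule obj5_mono) (use h1 h2 h3 h4 h5 in auto)
  qed
  show ?thesis using n1 nb pmf_r obj by blast
qed

lemma qY_lin: "qY W (\<lambda>a b. \<Sum>u\<in>I. \<beta> u * q u a b) c = (\<Sum>u\<in>I. \<beta> u * qY W (q u) c)"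
  unfolding qY_def by (simp add: sum_distrib_right sum_distrib_left sum.swap[of _ I] mult.assoc)

definition Kt :: "('x1::finite \<Rightarrow> 'x2::finite \<Rightarrow> 'y::finite \<Rightarrow> real) \<Rightarrow> ('x1 \<Rightarrow> 'x2 \<Rightarrow> real) \<Rightarrow> real" where
  "Kt W s = (\<Sum>a\<in>UNIV. \<Sum>b\<in>UNIV. s a b * (\<Sum>c\<in>UNIV. W a b c * log 2 (W a b c)))"

lemma Kt_lin: "Kt W (\<lambda>a b. \<Sum>u\<in>I. \<beta> u * q u a b) = (\<Sum>u\<in>I. \<beta> u * Kt W (q u))"
  unfolding Kt_def by (simp add: sum_distrib_right sum_distrib_left sum.swap[of _ I] mult.assoc)

lemma T5f_alt: "T5f W \<pi> = Kt W \<pi> - (\<Sum>c\<in>UNIV. qY W \<pi> c * log 2 (qY W \<pi> c))"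
  unfolding T5f_def Kt_def ..

lemma mass_lin: "mass (\<lambda>a b. \<Sum>u\<in>I. \<beta> u * q u a b) = (\<Sum>u\<in>I. \<beta> u * mass (q u))"
  unfolding mass_def by (simp add: sum_distrib_left sum.swap[of _ I])

lemma mass_qY:
  assumes "is_mac W"
  shows "(\<Sum>c\<in>UNIV. qY W s c) = mass s"
proof -
  have W1: "\<And>a b. (\<Sum>c\<in>UNIV. W a b c) = 1" using assms by (auto simp: is_mac_def)
  have "(\<Sum>c\<in>UNIV. \<Sum>a\<in>UNIV. \<Sum>b\<in>UNIV. s a b * W a b c)
      = (\<Sum>a\<in>UNIV. \<Sum>c\<in>UNIV. \<Sum>b\<in>UNIV. s a b * W a b c)" by (rule sum.swap)
  also have "\<dots> = (\<Sum>a\<in>UNIV. \<Sum>b\<in>UNIV. \<Sum>c\<in>UNIV. s a b * W a b c)"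
    by (rule sum.cong[OF refl], rule sum.swap)
  also have "\<dots> = (\<Sum>a\<in>UNIV. \<Sum>b\<in>UNIV. s a b)"
    by (simp add: sum_distrib_left[symmetric] W1)
  finally show ?thesis unfolding qY_def mass_def .
qed

lemma reduce:
  fixes W :: "'x1::finite \<Rightarrow> 'x2::finite \<Rightarrow> 'y::finite \<Rightarrow> real"
    and q :: "nat \<Rightarrow> 'x1 \<Rightarrow> 'x2 \<Rightarrow> real"
  assumes mac: "is_mac W" and pmf: "is_pmf_ux N q" and N1: "N \<ge> 1"
  shows "\<exists>k r. 1 \<le> k \<and> k \<le> U_bound W \<and> is_pmf_ux k r \<and> (\<forall>C1 C2. f_obj W N q C1 C2 \<le> f_obj W k r C1 C2)"
proof -
  define I where "I = {u\<in>{..<N}. mass (q u) > 0}"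
  have fI: "finite I" and IN: "I \<subseteq> {..<N}" by (auto simp: I_def)
  have qnn: "q u a b \<ge> 0" for u a b using pmf by (simp add: is_pmf_ux_def)
  have mnn: "mass (q u) \<ge> 0" for u unfolding mass_def by (intro sum_nonneg qnn)
  have out: "q u = (\<lambda>a b. 0)" if "u < N" "u \<notin> I" for u
  proof -
    have m0: "mass (q u) = 0" using that mnn[of u] by (auto simp: I_def)
    have "\<forall>a\<in>UNIV. (\<Sum>b\<in>UNIV. q u a b) = 0"
      using m0 sum_nonneg_eq_0_iff[of UNIV "\<lambda>a. \<Sum>b\<in>UNIV. q u a b"] qnn
      by (simp add: mass_def sum_nonneg)
    then have "\<forall>a b. q u a b = 0"
      using sum_nonneg_eq_0_iff[of UNIV "q u _"] qnn by simp
    then show ?thesis by (simp add: fun_eq_iff)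
  qed
  have mpos: "\<And>u. u \<in> I \<Longrightarrow> mass (q u) > 0" by (simp add: I_def)
  have piI: "(\<lambda>a b. \<Sum>u<N. q u a b) = (\<lambda>a b. \<Sum>u\<in>I. q u a b)"
  proof (intro ext)
    fix a b show "(\<Sum>u<N. q u a b) = (\<Sum>u\<in>I. q u a b)"
      by (rule sum.mono_neutral_right) (use IN out in auto)
  qed
  have massI: "(\<Sum>u\<in>I. mass (q u)) = 1"
  proof -
    have "(\<Sum>u\<in>I. mass (q u)) = mass (\<lambda>a b. \<Sum>u\<in>I. 1 * q u a b)" using mass_lin[where I=I and \<beta>="\<lambda>_. 1" and q=q] by simp
    also have "\<dots> = mass (\<lambda>a b. \<Sum>u<N. q u a b)" using piI by simp
    also have "\<dots> = (\<Sum>u<N. mass (q u))" using mass_lin[where I="{..<N}" and \<beta>="\<lambda>_. 1" and q=q] by simp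
    also have "\<dots> = 1" using pmf by (simp add: is_pmf_ux_def mass_def)
    finally show ?thesis .
  qed
  define g1 where "g1 u = G1 W (q u)" for u
  define g2 where "g2 u = G2 W (q u)" for u
  define g3 where "g3 u = G3 W (q u)" for u
  define g4 where "g4 u = G4 W (q u)" for u
  have hgen: "(\<Sum>u\<in>I. \<beta> u * g1 u) \<le> (\<Sum>u\<in>I. g1 u)
      \<and> (\<Sum>u\<in>I. \<beta> u * g2 u) \<ge> (\<Sum>u\<in>I. g2 u) \<and> (\<Sum>u\<in>I. \<beta> u * g3 u) \<ge> (\<Sum>u\<in>I. g3 u)
      \<and> (\<Sum>u\<in>I. \<beta> u * g4 u) - (\<Sum>u\<in>I. \<beta> u * g1 u) \<ge> (\<Sum>u\<in>I. g4 u) - (\<Sum>u\<in>I. g1 u)"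
    if e1: "(\<Sum>u\<in>I. \<beta> u * (- g1 u)) \<ge> (\<Sum>u\<in>I. 1 * (- g1 u))"
      and e2: "(\<Sum>u\<in>I. \<beta> u * (g2 u + g1 u)) = (\<Sum>u\<in>I. 1 * (g2 u + g1 u))"
      and e3: "(\<Sum>u\<in>I. \<beta> u * (g3 u + g1 u)) = (\<Sum>u\<in>I. 1 * (g3 u + g1 u))"
      and e4: "(\<Sum>u\<in>I. \<beta> u * (g4 u + g1 u)) = (\<Sum>u\<in>I. 1 * (g4 u + g1 u))" for \<beta>
  proof -
    have a1: "(\<Sum>u\<in>I. \<beta> u * g1 u) \<le> (\<Sum>u\<in>I. g1 u)" using e1 by (simp add: sum_negf)
    have a2: "(\<Sum>u\<in>I. \<beta> u * g2 u) + (\<Sum>u\<in>I. \<beta> u * g1 u) = (\<Sum>u\<in>I. g2 u) + (\<Sum>u\<in>I. g1 u)"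
      using e2 by (simp add: distrib_left sum.distrib)
    have a3: "(\<Sum>u\<in>I. \<beta> u * g3 u) + (\<Sum>u\<in>I. \<beta> u * g1 u) = (\<Sum>u\<in>I. g3 u) + (\<Sum>u\<in>I. g1 u)"
      using e3 by (simp add: distrib_left sum.distrib)
    have a4: "(\<Sum>u\<in>I. \<beta> u * g4 u) + (\<Sum>u\<in>I. \<beta> u * g1 u) = (\<Sum>u\<in>I. g4 u) + (\<Sum>u\<in>I. g1 u)"
      using e4 by (simp add: distrib_left sum.distrib)
    show ?thesis using a1 a2 a3 a4 by linarith
  qed
  show ?thesis
  proof (cases "CARD('x1) * CARD('x2) + 3 \<le> CARD('y) + 4")
    case True
    define a :: "nat \<Rightarrow> (real^('x1 \<times> 'x2)) \<times> (real \<times> real \<times> real)" where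
      "a u = ((\<chi> x. q u (fst x) (snd x)), (g2 u + g1 u, g3 u + g1 u, g4 u + g1 u))" for u
    have lin: "(\<Sum>u\<in>I. v u * mass (q u)) = 0" if z: "(\<Sum>u\<in>I. v u *\<^sub>R a u) = 0" for v
    proof -
      have z1: "(\<Sum>u\<in>I. v u * q u x y) = 0" for x y
      proof -
        have "fst (\<Sum>u\<in>I. v u *\<^sub>R a u) $ (x,y) = 0" using z by simp
        then show ?thesis by (simp add: fst_sum a_def)
      qed
      have "(\<Sum>u\<in>I. v u * mass (q u)) = mass (\<lambda>x y. \<Sum>u\<in>I. v u * q u x y)" by (rule mass_lin[symmetric])
      also have "\<dots> = 0" by (simp add: z1 mass_def)
      finally show ?thesis .
    qed
    obtain \<beta> where b: "\<forall>u\<in>I. \<beta> u \<ge> 0" "(\<Sum>u\<in>I. \<beta> u *\<^sub>R a u) = (\<Sum>u\<in>I. 1 *\<^sub>R a u)"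
       "(\<Sum>u\<in>I. \<beta> u * (- g1 u)) \<ge> (\<Sum>u\<in>I. 1 * (- g1 u))" "card {u\<in>I. \<beta> u \<noteq> 0} \<le> DIM((real^('x1 \<times> 'x2)) \<times> (real \<times> real \<times> real))"
      using spec[OF absred_gen[where I=I and m="\<lambda>u. mass (q u)" and a=a and g="\<lambda>u. - g1 u" and n="card I", OF fI mpos lin], of "\<lambda>_. 1"]
      by auto
    have c1: "(\<Sum>u\<in>I. \<beta> u * q u x y) = (\<Sum>u\<in>I. q u x y)" for x y
    proof -
      have "fst (\<Sum>u\<in>I. \<beta> u *\<^sub>R a u) $ (x,y) = fst (\<Sum>u\<in>I. 1 *\<^sub>R a u) $ (x,y)" using b(2) by simp
      then show ?thesis by (simp add: fst_sum a_def)
    qed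
    have sn: "snd (\<Sum>u\<in>I. \<beta> u *\<^sub>R a u) = snd (\<Sum>u\<in>I. 1 *\<^sub>R a u)" using b(2) by simp
    have c2: "(\<Sum>u\<in>I. \<beta> u * (g2 u + g1 u)) = (\<Sum>u\<in>I. 1 * (g2 u + g1 u))"
      using arg_cong[OF sn, of fst] by (simp add: snd_sum fst_sum a_def)
    have c3: "(\<Sum>u\<in>I. \<beta> u * (g3 u + g1 u)) = (\<Sum>u\<in>I. 1 * (g3 u + g1 u))"
      using arg_cong[OF sn, of "\<lambda>z. fst (snd z)"] by (simp add: snd_sum fst_sum a_def)
    have c4: "(\<Sum>u\<in>I. \<beta> u * (g4 u + g1 u)) = (\<Sum>u\<in>I. 1 * (g4 u + g1 u))"
      using arg_cong[OF sn, of "\<lambda>z. snd (snd z)"] by (simp add: snd_sum fst_sum a_def)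
    have pib: "(\<lambda>a b. \<Sum>u\<in>I. \<beta> u * q u a b) = (\<lambda>a b. \<Sum>u<N. q u a b)"
      using c1 piI by (simp add: fun_eq_iff)
    have hs: "(\<Sum>u\<in>I. \<beta> u * mass (q u)) = 1"
      using mass_lin[where I=I and \<beta>=\<beta> and q=q] pib piI massI mass_lin[where I=I and \<beta>="\<lambda>_. 1" and q=q] by simp
    have hc: "card {u\<in>I. \<beta> u \<noteq> 0} \<le> U_bound W"
      using b(4) True by (simp add: U_bound_def)
    show ?thesis
      by (rule reduce_core[OF pmf N1 IN out, of \<beta>])
         (use b(1) hgen[OF b(3) c2 c3 c4] pib hs hc in \<open>auto simp: g1_def g2_def g3_def g4_def\<close>)
  next
    case False
    define a :: "nat \<Rightarrow> (real^'y) \<times> (real \<times> real \<times> real \<times> real)" where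
      "a u = ((\<chi> c. qY W (q u) c), (g2 u + g1 u, g3 u + g1 u, g4 u + g1 u, Kt W (q u)))" for u
    have lin: "(\<Sum>u\<in>I. v u * mass (q u)) = 0" if z: "(\<Sum>u\<in>I. v u *\<^sub>R a u) = 0" for v
    proof -
      have z1: "(\<Sum>u\<in>I. v u * qY W (q u) c) = 0" for c
      proof -
        have "fst (\<Sum>u\<in>I. v u *\<^sub>R a u) $ c = 0" using z by simp
        then show ?thesis by (simp add: fst_sum a_def)
      qed
      have "(\<Sum>u\<in>I. v u * mass (q u)) = (\<Sum>u\<in>I. v u * (\<Sum>c\<in>UNIV. qY W (q u) c))"
        by (simp add: mass_qY[OF mac])
      also have "\<dots> = (\<Sum>c\<in>UNIV. \<Sum>u\<in>I. v u * qY W (q u) c)"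
        by (simp add: sum_distrib_left sum.swap[of _ I])
      also have "\<dots> = 0" by (simp add: z1)
      finally show ?thesis .
    qed
    obtain \<beta> where b: "\<forall>u\<in>I. \<beta> u \<ge> 0" "(\<Sum>u\<in>I. \<beta> u *\<^sub>R a u) = (\<Sum>u\<in>I. 1 *\<^sub>R a u)"
       "(\<Sum>u\<in>I. \<beta> u * (- g1 u)) \<ge> (\<Sum>u\<in>I. 1 * (- g1 u))" "card {u\<in>I. \<beta> u \<noteq> 0} \<le> DIM((real^'y) \<times> (real \<times> real \<times> real \<times> real))"
      using spec[OF absred_gen[where I=I and m="\<lambda>u. mass (q u)" and a=a and g="\<lambda>u. - g1 u" and n="card I", OF fI mpos lin], of "\<lambda>_. 1"]
      by auto
    have c1: "(\<Sum>u\<in>I. \<beta> u * qY W (q u) c) = (\<Sum>u\<in>I. qY W (q u) c)" for c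
    proof -
      have "fst (\<Sum>u\<in>I. \<beta> u *\<^sub>R a u) $ c = fst (\<Sum>u\<in>I. 1 *\<^sub>R a u) $ c" using b(2) by simp
      then show ?thesis by (simp add: fst_sum a_def)
    qed
    have sn: "snd (\<Sum>u\<in>I. \<beta> u *\<^sub>R a u) = snd (\<Sum>u\<in>I. 1 *\<^sub>R a u)" using b(2) by simp
    have c2: "(\<Sum>u\<in>I. \<beta> u * (g2 u + g1 u)) = (\<Sum>u\<in>I. 1 * (g2 u + g1 u))"
      using arg_cong[OF sn, of fst] by (simp add: snd_sum fst_sum a_def)
    have c3: "(\<Sum>u\<in>I. \<beta> u * (g3 u + g1 u)) = (\<Sum>u\<in>I. 1 * (g3 u + g1 u))"
      using arg_cong[OF sn, of "\<lambda>z. fst (snd z)"] by (simp add: snd_sum fst_sum a_def)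
    have c4: "(\<Sum>u\<in>I. \<beta> u * (g4 u + g1 u)) = (\<Sum>u\<in>I. 1 * (g4 u + g1 u))"
      using arg_cong[OF sn, of "\<lambda>z. fst (snd (snd z))"] by (simp add: snd_sum fst_sum a_def)
    have c5: "(\<Sum>u\<in>I. \<beta> u * Kt W (q u)) = (\<Sum>u\<in>I. 1 * Kt W (q u))"
      using arg_cong[OF sn, of "\<lambda>z. snd (snd (snd z))"] by (simp add: snd_sum fst_sum a_def)
    have hs: "(\<Sum>u\<in>I. \<beta> u * mass (q u)) = 1"
    proof -
      have "(\<Sum>u\<in>I. \<beta> u * mass (q u)) = (\<Sum>c\<in>UNIV. \<Sum>u\<in>I. \<beta> u * qY W (q u) c)"
        by (simp add: mass_qY[OF mac, symmetric] sum_distrib_left sum.swap[of _ I])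
      also have "\<dots> = (\<Sum>c\<in>UNIV. \<Sum>u\<in>I. qY W (q u) c)" by (simp add: c1)
      also have "\<dots> = (\<Sum>u\<in>I. mass (q u))"
        by (simp add: mass_qY[OF mac, symmetric] sum.swap[of _ I])
      finally show ?thesis using massI by simp
    qed
    let ?pb = "\<lambda>a b. \<Sum>u\<in>I. \<beta> u * q u a b"
    let ?pN = "\<lambda>a b. \<Sum>u<N. q u a b"
    have pN1: "?pN = (\<lambda>a b. \<Sum>u\<in>I. 1 * q u a b)" using piI by simp
    have nnb: "?pb a b \<ge> 0" for a b using b(1) qnn by (auto intro!: sum_nonneg mult_nonneg_nonneg)
    have nnN: "?pN a b \<ge> 0" for a b using qnn by (auto intro!: sum_nonneg)
    have sb: "(\<Sum>a\<in>UNIV. \<Sum>b\<in>UNIV. ?pb a b) = 1" using mass_lin[where I=I and \<beta>=\<beta> and q=q] hs by (simp add: mass_def)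
    have sN: "(\<Sum>a\<in>UNIV. \<Sum>b\<in>UNIV. ?pN a b) = 1"
      using pmf by (simp add: is_pmf_ux_def sum.swap[of _ "{..<N}"])
    have qeq: "qY W ?pb c = qY W ?pN c" for c
      unfolding pN1 qY_lin using c1 by simp
    have Keq: "Kt W ?pb = Kt W ?pN"
      unfolding pN1 Kt_lin using c5 by simp
    have h5: "G4 W ?pb = G4 W ?pN"
      unfolding G4_formula[OF mac nnb sb] G4_formula[OF mac nnN sN] T5f_alt qeq Keq ..
    have hc: "card {u\<in>I. \<beta> u \<noteq> 0} \<le> U_bound W"
      using b(4) False by (simp add: U_bound_def)
    show ?thesis
      by (rule reduce_core[OF pmf N1 IN out, of \<beta>])
         (use b(1) hgen[OF b(3) c2 c3 c4] h5 hs hc in \<open>auto simp: g1_def g2_def g3_def g4_def\<close>)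
  qed
qed

lemma sum_split_add: "(\<Sum>u<k + (k'::nat). f u) = (\<Sum>u<k. f u) + (\<Sum>i<k'. f (k + i))"
  by (induction k') (simp_all add: add.assoc)

lemma mix:
  fixes W :: "'x1::finite \<Rightarrow> 'x2::finite \<Rightarrow> 'y::finite \<Rightarrow> real"
  assumes mac: "is_mac W" and pmf1: "is_pmf_ux k p" and k1: "k \<ge> 1"
    and pmf2: "is_pmf_ux k' p'" and k1': "k' \<ge> 1" and l: "0 \<le> l" "l \<le> 1"
  shows "\<exists>N q. N \<ge> 1 \<and> is_pmf_ux N q \<and>
     f_obj W N q (l * C1 + (1 - l) * C1') (l * C2 + (1 - l) * C2')
       \<ge> l * f_obj W k p C1 C2 + (1 - l) * f_obj W k' p' C1' C2'"
proof -
  define q where "q u = (\<lambda>a b. if u < k then l * p u a b else (1 - l) * p' (u - k) a b)" for u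
  define N where "N = k + k'"
  have N1: "N \<ge> 1" using k1 by (simp add: N_def)
  have l1: "0 \<le> 1 - l" using l by simp
  have pnn: "p u a b \<ge> 0" "p' u a b \<ge> 0" for u a b using pmf1 pmf2 by (auto simp: is_pmf_ux_def)
  have qsplit: "(\<Sum>u<N. F (q u)) = (\<Sum>u<k. F (\<lambda>a b. l * p u a b)) + (\<Sum>i<k'. F (\<lambda>a b. (1 - l) * p' i a b))"
    for F :: "('x1 \<Rightarrow> 'x2 \<Rightarrow> real) \<Rightarrow> real"
    unfolding N_def sum_split_add by (simp add: q_def)
  have Gs: "(\<Sum>u<N. G (q u)) = l * (\<Sum>u<k. G (p u)) + (1 - l) * (\<Sum>u<k'. G (p' u))"
    if Gsc: "\<And>c s. c \<ge> 0 \<Longrightarrow> G (\<lambda>a b. c * s a b) = c * G s" for G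
    unfolding qsplit Gsc[OF l(1)] Gsc[OF l1] by (simp add: sum_distrib_left)
  have piq: "(\<lambda>a b. \<Sum>u<N. q u a b) = (\<lambda>a b. l * (\<Sum>u<k. p u a b) + (1 - l) * (\<Sum>u<k'. p' u a b))"
  proof (intro ext)
    fix a b show "(\<Sum>u<N. q u a b) = l * (\<Sum>u<k. p u a b) + (1 - l) * (\<Sum>u<k'. p' u a b)"
      unfolding N_def sum_split_add by (simp add: q_def sum_distrib_left)
  qed
  have pmfq: "is_pmf_ux N q"
    unfolding is_pmf_ux_def
  proof (intro conjI allI impI)
    fix u a b show "0 \<le> q u a b" using pnn l l1 by (simp add: q_def)
  next
    fix u a b assume "N \<le> u"
    then have "u \<ge> k" "u - k \<ge> k'" by (auto simp: N_def)
    then show "q u a b = 0" using pmf2 by (simp add: q_def is_pmf_ux_def)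
  next
    have "(\<Sum>u<N. \<Sum>a\<in>UNIV. \<Sum>b\<in>UNIV. q u a b) = (\<Sum>a\<in>UNIV. \<Sum>b\<in>UNIV. \<Sum>u<N. q u a b)"
      by (simp add: sum.swap[of _ "{..<N}"])
    also have "\<dots> = l * (\<Sum>a\<in>UNIV. \<Sum>b\<in>UNIV. \<Sum>u<k. p u a b) + (1 - l) * (\<Sum>a\<in>UNIV. \<Sum>b\<in>UNIV. \<Sum>u<k'. p' u a b)"
      using piq by (simp add: fun_eq_iff sum.distrib sum_distrib_left)
    also have "\<dots> = l * 1 + (1 - l) * 1"
      using pmf1 pmf2 by (simp add: is_pmf_ux_def sum.swap[of _ "{..<k}"] sum.swap[of _ "{..<k'}"])
    finally show "(\<Sum>u<N. \<Sum>a\<in>UNIV. \<Sum>b\<in>UNIV. q u a b) = 1" by simp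
  qed
  let ?pi = "\<lambda>a b. \<Sum>u<k. p u a b" and ?pi' = "\<lambda>a b. \<Sum>u<k'. p' u a b"
  have nn1: "?pi a b \<ge> 0" "?pi' a b \<ge> 0" for a b using pnn by (auto intro!: sum_nonneg)
  have s1: "(\<Sum>a\<in>UNIV. \<Sum>b\<in>UNIV. ?pi a b) = 1" "(\<Sum>a\<in>UNIV. \<Sum>b\<in>UNIV. ?pi' a b) = 1"
    using pmf1 pmf2 by (simp_all add: is_pmf_ux_def sum.swap[of _ "{..<k}"] sum.swap[of _ "{..<k'}"])
  have nnq: "(\<lambda>a b. \<Sum>u<N. q u a b) a b \<ge> 0" for a b using pmfq by (auto simp: is_pmf_ux_def intro!: sum_nonneg)
  have sq: "(\<Sum>a\<in>UNIV. \<Sum>b\<in>UNIV. (\<lambda>a b. \<Sum>u<N. q u a b) a b) = 1"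
    using pmfq by (simp add: is_pmf_ux_def sum.swap[of _ "{..<N}"])
  have T5: "G4 W (\<lambda>a b. \<Sum>u<N. q u a b) \<ge> l * G4 W ?pi + (1 - l) * G4 W ?pi'"
  proof -
    have "l * G4 W ?pi + (1 - l) * G4 W ?pi' = l * T5f W ?pi + (1 - l) * T5f W ?pi'"
      using G4_formula[OF mac nn1(1) s1(1)] G4_formula[OF mac nn1(2) s1(2)] by simp
    also have "\<dots> \<le> T5f W (\<lambda>a b. l * ?pi a b + (1 - l) * ?pi' a b)"
      by (rule T5f_concave[OF mac nn1(1) nn1(2) l])
    also have "\<dots> = T5f W (\<lambda>a b. \<Sum>u<N. q u a b)" using piq by simp
    also have "\<dots> = G4 W (\<lambda>a b. \<Sum>u<N. q u a b)"
      by (rule G4_formula[OF mac, symmetric]) (use nnq sq in auto)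
    finally show ?thesis .
  qed
  show ?thesis
  proof (intro exI conjI)
    show "N \<ge> 1" by (rule N1)
    show "is_pmf_ux N q" by (rule pmfq)
    show "f_obj W N q (l * C1 + (1 - l) * C1') (l * C2 + (1 - l) * C2')
       \<ge> l * f_obj W k p C1 C2 + (1 - l) * f_obj W k' p' C1' C2'"
    proof -
      have X1: "(\<Sum>u<N. G1 W (q u)) = l * (\<Sum>u<k. G1 W (p u)) + (1 - l) * (\<Sum>u<k'. G1 W (p' u))"
        by (rule Gs) (rule G_scale)
      have X2: "(\<Sum>u<N. G2 W (q u)) = l * (\<Sum>u<k. G2 W (p u)) + (1 - l) * (\<Sum>u<k'. G2 W (p' u))"
        by (rule Gs) (rule G_scale)
      have X3: "(\<Sum>u<N. G3 W (q u)) = l * (\<Sum>u<k. G3 W (p u)) + (1 - l) * (\<Sum>u<k'. G3 W (p' u))"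
        by (rule Gs) (rule G_scale)
      have X4: "(\<Sum>u<N. G4 W (q u)) = l * (\<Sum>u<k. G4 W (p u)) + (1 - l) * (\<Sum>u<k'. G4 W (p' u))"
        by (rule Gs) (rule G_scale)
      show ?thesis
        unfolding f_obj_eq[OF N1] f_obj_eq[OF k1] f_obj_eq[OF k1'] X1 X2 X3 X4
        by (rule obj5_concave[OF l T5])
    qed
  qed
qed

lemma sup_comb:
  fixes A B :: "real set"
  assumes neA: "A \<noteq> {}" and neB: "B \<noteq> {}" and l: "0 < l" "l < 1"
    and H: "\<And>x y. x \<in> A \<Longrightarrow> y \<in> B \<Longrightarrow> l * x + (1 - l) * y \<le> S"
  shows "l * Sup A + (1 - l) * Sup B \<le> S"
proof -
  have l1: "0 < 1 - l" using l by simp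
  have H1: "l * Sup A + (1 - l) * y \<le> S" if y: "y \<in> B" for y
  proof -
    have "Sup A \<le> (S - (1 - l) * y) / l"
    proof (rule cSup_least[OF neA])
      fix x assume "x \<in> A"
      then have "l * x \<le> S - (1 - l) * y" using H[OF _ y] by smt
      then show "x \<le> (S - (1 - l) * y) / l" using l by (simp add: pos_le_divide_eq mult.commute)
    qed
    then have "l * Sup A \<le> S - (1 - l) * y" using l by (simp add: pos_le_divide_eq mult.commute)
    then show ?thesis by simp
  qed
  have "Sup B \<le> (S - l * Sup A) / (1 - l)"
  proof (rule cSup_least[OF neB])
    fix y assume "y \<in> B"
    then have "(1 - l) * y \<le> S - l * Sup A" using H1 by smt
    then show "y \<le> (S - l * Sup A) / (1 - l)" using l1 by (simp add: pos_le_divide_eq mult.commute)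
  qed
  then have "(1 - l) * Sup B \<le> S - l * Sup A" using l1 by (simp add: pos_le_divide_eq mult.commute)
  then show ?thesis by simp
qed

theorem proposition1:
  fixes W :: "'x1::finite \<Rightarrow> 'x2::finite \<Rightarrow> 'y::finite \<Rightarrow> real"
  assumes "is_mac W"
  shows "concave_on {C. fst C \<ge> 0 \<and> snd C \<ge> 0} (f_l W)"
proof -
  note mac = assms
  define A where "A C = {f_obj W k p (fst C) (snd C) | k p. 1 \<le> k \<and> k \<le> U_bound W \<and> is_pmf_ux k p}"
    for C :: "real \<times> real"
  have fl: "f_l W C = Sup (A C)" for C by (simp add: f_l_def A_def)
  define p0 :: "nat \<Rightarrow> 'x1 \<Rightarrow> 'x2 \<Rightarrow> real" where
    "p0 u a b = (if u = 0 then 1 / (real CARD('x1) * real CARD('x2)) else 0)" for u a b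
  have c1: "real CARD('x1) > 0" "real CARD('x2) > 0" by simp_all
  have pmf0: "is_pmf_ux 1 p0"
    unfolding is_pmf_ux_def p0_def using c1 by auto
  have ub: "1 \<le> U_bound W" by (simp add: U_bound_def)
  have ne: "A C \<noteq> {}" for C using pmf0 ub unfolding A_def by blast
  have bdd: "bdd_above (A C)" for C
  proof (rule bdd_aboveI)
    fix x assume "x \<in> A C"
    then obtain k p where kp: "x = f_obj W k p (fst C) (snd C)" "1 \<le> k" "is_pmf_ux k p"
      unfolding A_def by blast
    have nn: "(\<lambda>a b. \<Sum>u<k. p u a b) a b \<ge> 0" for a b using kp(3) by (auto simp: is_pmf_ux_def intro!: sum_nonneg)
    have s1: "(\<Sum>a\<in>UNIV. \<Sum>b\<in>UNIV. (\<lambda>a b. \<Sum>u<k. p u a b) a b) = 1"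
      using kp(3) by (simp add: is_pmf_ux_def sum.swap[of _ "{..<k}"])
    have "x \<le> G4 W (\<lambda>a b. \<Sum>u<k. p u a b)" unfolding kp(1) f_obj_eq[OF kp(2)] by (rule obj5_le_t)
    also have "\<dots> = T5f W (\<lambda>a b. \<Sum>u<k. p u a b)" by (rule G4_formula[OF mac]) (use nn s1 in auto)
    also have "\<dots> \<le> real CARD('y) / ln 2" by (rule T5f_bound[OF mac]) (use nn in auto)
    finally show "x \<le> real CARD('y) / ln 2" .
  qed
  have key: "l * x + (1 - l) * y \<le> Sup (A (l *\<^sub>R C + (1 - l) *\<^sub>R C'))"
    if x: "x \<in> A C" and y: "y \<in> A C'" and l: "0 \<le> l" "l \<le> 1" for x y l C C'
  proof -
    obtain k p where kp: "x = f_obj W k p (fst C) (snd C)" "1 \<le> k" "is_pmf_ux k p"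
      using x unfolding A_def by blast
    obtain k' p' where kp': "y = f_obj W k' p' (fst C') (snd C')" "1 \<le> k'" "is_pmf_ux k' p'"
      using y unfolding A_def by blast
    obtain N q where Nq: "N \<ge> 1" "is_pmf_ux N q"
      "f_obj W N q (l * fst C + (1 - l) * fst C') (l * snd C + (1 - l) * snd C') \<ge> l * x + (1 - l) * y"
      using mix[OF mac kp(3) kp(2) kp'(3) kp'(2) l, of "fst C" "snd C" "fst C'" "snd C'"] kp(1) kp'(1) by blast
    obtain k'' r where kr: "1 \<le> k''" "k'' \<le> U_bound W" "is_pmf_ux k'' r"
      "\<forall>C1 C2. f_obj W N q C1 C2 \<le> f_obj W k'' r C1 C2"
      using reduce[OF mac Nq(2) Nq(1)] by blast
    have mem: "f_obj W k'' r (l * fst C + (1 - l) * fst C') (l * snd C + (1 - l) * snd C') \<in> A (l *\<^sub>R C + (1 - l) *\<^sub>R C')"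
      unfolding A_def using kr(1-3) by auto
    have "l * x + (1 - l) * y \<le> f_obj W k'' r (l * fst C + (1 - l) * fst C') (l * snd C + (1 - l) * snd C')"
      using Nq(3) kr(4) by (meson order_trans)
    also have "\<dots> \<le> Sup (A (l *\<^sub>R C + (1 - l) *\<^sub>R C'))" by (rule cSup_upper[OF mem bdd])
    finally show ?thesis .
  qed
  have cvx: "convex {C :: real \<times> real. fst C \<ge> 0 \<and> snd C \<ge> 0}"
    unfolding convex_def by auto
  show ?thesis
    unfolding concave_on_iff
  proof (intro conjI cvx ballI allI impI)
    fix C C' :: "real \<times> real" and u v :: real
    assume u: "0 \<le> u" and v: "0 \<le> v" and uv: "u + v = 1"
    have v1: "v = 1 - u" using uv by simp
    show "u * f_l W C + v * f_l W C' \<le> f_l W (u *\<^sub>R C + v *\<^sub>R C')"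
    proof (cases "u = 0 \<or> u = 1")
      case True then show ?thesis using v1 by auto
    next
      case False
      then have ul: "0 < u" "u < 1" using u v v1 by auto
      show ?thesis unfolding fl v1
        by (rule sup_comb[OF ne ne ul]) (rule key, auto simp: less_imp_le ul)
    qed
  qed
qed

end
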